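(* Let $(\mathcal N,g)$ be a complete, connected, smooth Riemannian manifold isometrically embedded in $\mathbb R^N$, let $\Omega\subset\mathbb R^m$ be an open, bounded, smooth domain, $\alpha\in]0,1[$, $\varepsilon>0$, $T>0$, and let ${\boldsymbol u}\in C^{\frac{3+\alpha}{2},3+\alpha}_{loc}(\overline\Omega\times[0,T[,\mathcal N)$ satisfy ${\boldsymbol u}_t=\pi_{\boldsymbol u}(\operatorname{div}{\boldsymbol Z})$ in $]0,T[\times\Omega$, where ${\boldsymbol Z}=\nabla{\boldsymbol u}/\sqrt{\varepsilon^2+|\nabla{\boldsymbol u}|^2}$. Then \[\tfrac12\partial_t|\nabla{\boldsymbol u}|^2=\partial_{x^i}\big({\boldsymbol u}_{x^k}\cdot\partial_{x^k}{\boldsymbol Z}_i\big)-\pi_{\boldsymbol u}({\boldsymbol u}_{x^ix^j})\cdot\partial_{x^j}{\boldsymbol Z}_i+{\boldsymbol Z}_i\cdot\mathcal R^\mathcal N_{\boldsymbol u}({\boldsymbol u}_{x^i},{\boldsymbol u}_{x^j}){\boldsymbol u}_{x^j}\] in $]0,T[\times\Omega$ (summation over repeated indices $i,j,k=1,\dots,m$).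
   Context: $\pi_{\boldsymbol p}$ is the orthogonal projection of $\mathbb R^N$ onto $T_{\boldsymbol p}\mathcal N$; ${\boldsymbol Z}_i$ denotes the $i$-th ($\mathbb R^N$-valued) component of ${\boldsymbol Z}$, and dots denote Euclidean scalar products in $\mathbb R^N$. $\mathcal A_{\boldsymbol p}$ is the second fundamental form of $\mathcal N\subset\mathbb R^N$ at ${\boldsymbol p}$, and the Riemann tensor is normalized by the Gauss equation ${\boldsymbol W}\cdot\mathcal R^\mathcal N_{\boldsymbol p}({\boldsymbol X},{\boldsymbol Y}){\boldsymbol Z}=\mathcal A_{\boldsymbol p}({\boldsymbol Y},{\boldsymbol Z})\cdot\mathcal A_{\boldsymbol p}({\boldsymbol X},{\boldsymbol W})-\mathcal A_{\boldsymbol p}({\boldsymbol X},{\boldsymbol Z})\cdot\mathcal A_{\boldsymbol p}({\boldsymbol Y},{\boldsymbol W})$ for ${\boldsymbol X},{\boldsymbol Y},{\boldsymbol Z},{\boldsymbol W}\in T_{\boldsymbol p}\mathcal N$. The parabolic Hölder space $C^{\frac{3+\alpha}{2},3+\alpha}_{loc}$ is as in Ladyzhenskaya–Solonnikov–Ural'tseva, local in time on $[0,T[$. *)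

theory Defs
  imports "HOL-Analysis.Analysis"
begin

fun Ck_on :: "nat \<Rightarrow> 'a::real_normed_vector set \<Rightarrow> ('a \<Rightarrow> 'b::real_normed_vector) \<Rightarrow> bool" where
  "Ck_on 0 S f = continuous_on S f"
| "Ck_on (Suc k) S f =
     (\<exists>f'. (\<forall>x\<in>S. (f has_derivative f' x) (at x)) \<and> (\<forall>v. Ck_on k S (\<lambda>x. f' x v)))"

definition smooth_on :: "'a::real_normed_vector set \<Rightarrow> ('a \<Rightarrow> 'b::real_normed_vector) \<Rightarrow> bool" where
  "smooth_on S f \<longleftrightarrow> (\<forall>k. Ck_on k S f)"

definition smooth_submanifold :: "'n::euclidean_space set \<Rightarrow> nat \<Rightarrow> bool" where
  "smooth_submanifold M n \<longleftrightarrow>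
     (\<forall>p\<in>M. \<exists>U V (\<phi>::'n \<Rightarrow> 'n) \<psi> E.
        open U \<and> p \<in> U \<and> open V \<and> smooth_on U \<phi> \<and> smooth_on V \<psi> \<and>
        \<phi> ` U = V \<and> (\<forall>x\<in>U. \<psi> (\<phi> x) = x) \<and> (\<forall>y\<in>V. \<phi> (\<psi> y) = y) \<and>
        subspace E \<and> dim E = n \<and> \<phi> ` (M \<inter> U) = V \<inter> E)"

definition path_len :: "(real \<Rightarrow> 'n::euclidean_space) \<Rightarrow> real" where
  "path_len \<gamma> = integral {0..1} (\<lambda>t. norm (vector_derivative \<gamma> (at t)))"

definition intrinsic_dist :: "'n::euclidean_space set \<Rightarrow> 'n \<Rightarrow> 'n \<Rightarrow> real" where
  "intrinsic_dist M p q =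
     Inf {path_len \<gamma> | \<gamma>. \<gamma> C1_differentiable_on {0..1} \<and> \<gamma> ` {0..1} \<subseteq> M \<and> \<gamma> 0 = p \<and> \<gamma> 1 = q}"

definition intrinsically_complete :: "'n::euclidean_space set \<Rightarrow> bool" where
  "intrinsically_complete M \<longleftrightarrow>
     (\<forall>s::nat \<Rightarrow> 'n. (\<forall>k. s k \<in> M) \<and>
        (\<forall>e>0. \<exists>K. \<forall>k\<ge>K. \<forall>l\<ge>K. intrinsic_dist M (s k) (s l) < e) \<longrightarrow>
        (\<exists>p\<in>M. (\<lambda>k. intrinsic_dist M (s k) p) \<longlonglongrightarrow> 0))"

definition tangent_space :: "'n::euclidean_space set \<Rightarrow> 'n \<Rightarrow> 'n set" where
  "tangent_space M p = {v. \<exists>\<gamma>::real \<Rightarrow> 'n. \<gamma> 0 = p \<and> (\<gamma> has_vector_derivative v) (at 0) \<and>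
                                  (\<forall>\<^sub>F t in nhds 0. \<gamma> t \<in> M)}"

definition orth_proj :: "'n::euclidean_space set \<Rightarrow> 'n \<Rightarrow> 'n" where
  "orth_proj S v = (THE w. w \<in> S \<and> (\<forall>s\<in>S. (v - w) \<bullet> s = 0))"

definition tproj :: "'n::euclidean_space set \<Rightarrow> 'n \<Rightarrow> 'n \<Rightarrow> 'n" where
  "tproj M p v = orth_proj (tangent_space M p) v"

definition sff :: "'n::euclidean_space set \<Rightarrow> 'n \<Rightarrow> 'n \<Rightarrow> 'n \<Rightarrow> 'n" where
  "sff M p X Y = (SOME w. \<exists>(\<gamma>::real \<Rightarrow> 'n) V V'.
      \<gamma> 0 = p \<and> (\<gamma> has_vector_derivative X) (at 0) \<and>
      (\<forall>\<^sub>F t in nhds 0. \<gamma> t \<in> M \<and> V t \<in> tangent_space M (\<gamma> t)) \<and>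
      V 0 = Y \<and> (V has_vector_derivative V') (at 0) \<and> w = V' - tproj M p V')"

text \<open>Riemann tensor of the induced metric, normalised by the Gauss equation:
W . R_p(X,Y)Z = A_p(Y,Z).A_p(X,W) - A_p(X,Z).A_p(Y,W).\<close>
definition riem :: "'n::euclidean_space set \<Rightarrow> 'n \<Rightarrow> 'n \<Rightarrow> 'n \<Rightarrow> 'n \<Rightarrow> 'n \<Rightarrow> real" where
  "riem M p X Y Z W = sff M p Y Z \<bullet> sff M p X W - sff M p X Z \<bullet> sff M p Y W"

definition smooth_domain :: "'m::euclidean_space set \<Rightarrow> bool" where
  "smooth_domain \<Omega> \<longleftrightarrow> open \<Omega> \<and> bounded \<Omega> \<and> connected \<Omega> \<and> \<Omega> \<noteq> {} \<and>
     (\<forall>p\<in>frontier \<Omega>. \<exists>U (\<rho>::'m \<Rightarrow> real). open U \<and> p \<in> U \<and> smooth_on U \<rho> \<and>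
        (\<forall>x\<in>U. \<exists>D. (\<rho> has_derivative D) (at x) \<and> D \<noteq> (\<lambda>_. 0)) \<and>
        \<Omega> \<inter> U = {x\<in>U. \<rho> x < 0})"

definition pdx :: "'m::euclidean_space \<Rightarrow> (real \<Rightarrow> 'm \<Rightarrow> 'b::real_normed_vector) \<Rightarrow> real \<Rightarrow> 'm \<Rightarrow> 'b" where
  "pdx e f t x = vector_derivative (\<lambda>h. f t (x + h *\<^sub>R e)) (at 0)"

definition pdt :: "(real \<Rightarrow> 'm \<Rightarrow> 'b::real_normed_vector) \<Rightarrow> real \<Rightarrow> 'm \<Rightarrow> 'b" where
  "pdt f t x = vector_derivative (\<lambda>s. f s x) (at t)"

text \<open>pD ds r f = (partial along the directions ds, outermost first) of (d/dt)^r f.\<close>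
fun pD :: "'m::euclidean_space list \<Rightarrow> nat \<Rightarrow> (real \<Rightarrow> 'm \<Rightarrow> 'b::real_normed_vector) \<Rightarrow> real \<Rightarrow> 'm \<Rightarrow> 'b" where
  "pD [] 0 f = f"
| "pD [] (Suc r) f = pdt (pD [] r f)"
| "pD (e # ds) r f = pdx e (pD ds r f)"

definition admissible :: "'m::euclidean_space list \<Rightarrow> nat \<Rightarrow> bool" where
  "admissible ds r \<longleftrightarrow> set ds \<subseteq> Basis \<and> 2 * r + length ds \<le> 3"

text \<open>All derivatives D_t^r D_x^s u with 2r+s <= 3 exist classically in the open cylinder,
extend continuously to closure Omega x [0,T[, and on every closed cylinder up to time T' < T
satisfy the Ladyzhenskaya-Solonnikov-Ural'tseva Hoelder conditions: exponent a in x when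
2r+s = 3, exponent (3+a-2r-s)/2 in t when 2r+s is 2 or 3 (sup norms are bounded by continuity
on the compact closed cylinder; suprema over the open cylinder equal those over its closure).\<close>
definition parabolic_holder_3a_loc ::
    "real \<Rightarrow> 'm::euclidean_space set \<Rightarrow> real \<Rightarrow> (real \<Rightarrow> 'm \<Rightarrow> 'n::euclidean_space) \<Rightarrow> bool" where
  "parabolic_holder_3a_loc a \<Omega> T u \<longleftrightarrow>
     continuous_on ({0..<T} \<times> closure \<Omega>) (\<lambda>(t, x). u t x) \<and>
     (\<forall>e ds r. admissible (e # ds) r \<longrightarrow>
        (\<forall>t\<in>{0<..<T}. \<forall>x\<in>\<Omega>.
           ((\<lambda>h. pD ds r u t (x + h *\<^sub>R e)) has_vector_derivative pD (e # ds) r u t x) (at 0))) \<and>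
     (\<forall>r. admissible ([]::'m list) (Suc r) \<longrightarrow>
        (\<forall>t\<in>{0<..<T}. \<forall>x\<in>\<Omega>.
           ((\<lambda>s. pD [] r u s x) has_vector_derivative pD [] (Suc r) u t x) (at t))) \<and>
     (\<forall>ds r. admissible ds r \<longrightarrow>
        (\<exists>g. continuous_on ({0..<T} \<times> closure \<Omega>) g \<and>
             (\<forall>t\<in>{0<..<T}. \<forall>x\<in>\<Omega>. g (t, x) = pD ds r u t x))) \<and>
     (\<forall>T'. 0 < T' \<and> T' < T \<longrightarrow> (\<forall>ds r. admissible ds r \<longrightarrow>
        (2 * r + length ds = 3 \<longrightarrow>
           (\<exists>C. \<forall>t\<in>{0<..T'}. \<forall>x\<in>\<Omega>. \<forall>y\<in>\<Omega>.
              norm (pD ds r u t x - pD ds r u t y) \<le> C * norm (x - y) powr a)) \<and>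
        (2 \<le> 2 * r + length ds \<longrightarrow>
           (\<exists>C. \<forall>t\<in>{0<..T'}. \<forall>s\<in>{0<..T'}. \<forall>x\<in>\<Omega>.
              norm (pD ds r u t x - pD ds r u s x)
                \<le> C * \<bar>t - s\<bar> powr ((3 + a - real (2 * r + length ds)) / 2)))))"

end

theory Submission
  imports Defs
begin

lemma hvd_quot:
  fixes f :: "real \<Rightarrow> 'v::real_normed_vector"
  assumes "(f has_vector_derivative f') (at x)"
  shows "((\<lambda>h. (f (x+h) - f x) /\<^sub>R h) \<longlongrightarrow> f') (at 0)"
proof -
  have "((\<lambda>y. norm (f y - f x - (y - x) *\<^sub>R f') / norm (y - x)) \<longlongrightarrow> 0) (at x)"
    using assms unfolding has_vector_derivative_def has_derivative_iff_norm by blast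
  hence L: "((\<lambda>h. norm (f (x+h) - f x - h *\<^sub>R f') / norm h) \<longlongrightarrow> 0) (at 0)"
    by (subst (asm) LIM_offset_zero_iff) (auto simp: add.commute)
  have E: "norm (f (x+h) - f x - h *\<^sub>R f') / norm h = norm ((f (x+h) - f x) /\<^sub>R h - f')"
    if "h \<noteq> 0" for h
  proof -
    have "(f (x+h) - f x) /\<^sub>R h - f' = (f (x+h) - f x - h *\<^sub>R f') /\<^sub>R h"
      using that by (simp add: scaleR_diff_right)
    thus ?thesis using that by (simp add: divide_inverse mult.commute)
  qed
  have "((\<lambda>h. norm ((f (x+h) - f x) /\<^sub>R h - f')) \<longlongrightarrow> 0) (at 0)"
    by (rule Lim_transform_within[OF L, where d=1]) (use E in auto)
  thus ?thesis by (simp add: tendsto_norm_zero_iff LIM_zero_iff)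
qed

lemma hvd_from_bound:
  fixes f :: "real \<Rightarrow> 'v::real_normed_vector"
  assumes "\<And>e. e > 0 \<Longrightarrow> \<exists>d>0. \<forall>h. 0 < \<bar>h\<bar> \<and> \<bar>h\<bar> < d \<longrightarrow> norm (f h - f 0 - h *\<^sub>R K) \<le> e * \<bar>h\<bar>"
  shows "(f has_vector_derivative K) (at 0)"
  unfolding has_vector_derivative_def has_derivative_iff_norm
proof (intro conjI)
  show "bounded_linear (\<lambda>h. h *\<^sub>R K)" by (rule bounded_linear_scaleR_left)
  show "((\<lambda>y. norm (f y - f 0 - (y - 0) *\<^sub>R K) / norm (y - 0)) \<longlongrightarrow> 0) (at 0)"
    unfolding Lim_at
  proof (intro allI impI)
    fix e :: real assume "e > 0"
    then obtain d where d: "d > 0" "\<forall>h. 0 < \<bar>h\<bar> \<and> \<bar>h\<bar> < d \<longrightarrow> norm (f h - f 0 - h *\<^sub>R K) \<le> (e/2) * \<bar>h\<bar>"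
      using assms[of "e/2"] by auto
    show "\<exists>d>0. \<forall>x. 0 < dist x 0 \<and> dist x 0 < d \<longrightarrow> dist (norm (f x - f 0 - (x - 0) *\<^sub>R K) / norm (x - 0)) 0 < e"
    proof (intro exI[of _ d] conjI allI impI)
      fix x :: real assume x: "0 < dist x 0 \<and> dist x 0 < d"
      hence "norm (f x - f 0 - x *\<^sub>R K) \<le> (e/2) * \<bar>x\<bar>" using d by auto
      hence "norm (f x - f 0 - x *\<^sub>R K) / \<bar>x\<bar> \<le> e/2" using x by (simp add: divide_simps)
      moreover have "norm (f x - f 0 - x *\<^sub>R K) / \<bar>x\<bar> \<ge> 0" by simp
      moreover have "dist (norm (f x - f 0 - (x - 0) *\<^sub>R K) / norm (x - 0)) 0 = norm (f x - f 0 - x *\<^sub>R K) / \<bar>x\<bar>"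
        by simp
      ultimately show "dist (norm (f x - f 0 - (x - 0) *\<^sub>R K) / norm (x - 0)) 0 < e" using \<open>e>0\<close> by linarith
    qed (use d in auto)
  qed
qed

lemma schwarz:
  fixes F Fa :: "real \<Rightarrow> real \<Rightarrow> 'v::real_normed_vector" and Fb :: "real \<Rightarrow> 'v"
    and G :: "real \<Rightarrow> real \<Rightarrow> 'v"
  assumes dpos: "\<delta> > 0"
  and D1: "\<And>\<alpha> \<beta>. \<bar>\<alpha>\<bar> < \<delta> \<Longrightarrow> \<bar>\<beta>\<bar> < \<delta> \<Longrightarrow> ((\<lambda>a. F a \<beta>) has_vector_derivative Fa \<alpha> \<beta>) (at \<alpha>)"
  and D2: "\<And>\<alpha>. \<bar>\<alpha>\<bar> < \<delta> \<Longrightarrow> ((\<lambda>b. F \<alpha> b) has_vector_derivative Fb \<alpha>) (at 0)"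
  and D12: "\<And>\<alpha> \<beta>. \<bar>\<alpha>\<bar> < \<delta> \<Longrightarrow> \<bar>\<beta>\<bar> < \<delta> \<Longrightarrow> ((\<lambda>b. Fa \<alpha> b) has_vector_derivative G \<alpha> \<beta>) (at \<beta>)"
  and cont: "\<And>e. e > 0 \<Longrightarrow> \<exists>d>0. \<forall>\<alpha> \<beta>. \<bar>\<alpha>\<bar> < d \<longrightarrow> \<bar>\<beta>\<bar> < d \<longrightarrow> norm (G \<alpha> \<beta> - G 0 0) \<le> e"
  shows "(Fb has_vector_derivative G 0 0) (at 0)"
proof (rule hvd_from_bound)
  fix e :: real assume e: "e > 0"
  define K where "K = G 0 0"
  define c where "c = e / 9"
  have c: "c > 0" using e by (simp add: c_def)
  obtain d0 where d0: "d0 > 0" "\<forall>\<alpha> \<beta>. \<bar>\<alpha>\<bar> < d0 \<longrightarrow> \<bar>\<beta>\<bar> < d0 \<longrightarrow> norm (G \<alpha> \<beta> - K) \<le> c"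
    using cont[OF c] unfolding K_def by blast
  define d where "d = min d0 \<delta>"
  have d: "d > 0" "d \<le> \<delta>" "d \<le> d0" using d0 dpos by (auto simp: d_def)
  define S where "S = {-d<..<d}"
  have S: "convex S" "\<And>x. x \<in> S \<longleftrightarrow> \<bar>x\<bar> < d" by (auto simp: S_def)
  have A: "norm (Fa s b - Fa s 0 - b *\<^sub>R K) \<le> 3 * c * \<bar>b\<bar>" if s: "\<bar>s\<bar> < d" and b: "\<bar>b\<bar> < d" for s b
  proof -
    have "norm (Fa s b - Fa s 0 - (b - 0) *\<^sub>R G s 0) \<le> norm (b - 0) * (2 * c)"
    proof (rule vector_differentiable_bound_linearization[where S=S and f' = "G s"])
      fix x assume "x \<in> S"
      hence "\<bar>x\<bar> < d" using S by auto
      thus "(Fa s has_vector_derivative G s x) (at x within S)"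
        using D12[of s x] s d by (auto intro: has_vector_derivative_at_within)
    next
      show "closed_segment 0 b \<subseteq> S" using S b d by (intro closed_segment_subset) auto
    next
      fix x assume "x \<in> S"
      hence "\<bar>x\<bar> < d" using S by auto
      hence "norm (G s x - K) \<le> c" "norm (G s 0 - K) \<le> c" using d0 d s by auto
      moreover have "norm (G s x - G s 0) \<le> norm (G s x - K) + norm (G s 0 - K)"
        by (rule order_trans[OF _ norm_triangle_ineq4]) (simp add: algebra_simps)
      ultimately show "norm (G s x - G s 0) \<le> 2 * c" by linarith
    next
      show "0 \<in> S" using S d by auto
    qed
    moreover have "norm (b *\<^sub>R (G s 0 - K)) \<le> \<bar>b\<bar> * c"
      using d0 d s by (auto intro!: mult_left_mono)
    moreover have "norm (Fa s b - Fa s 0 - b *\<^sub>R K) \<le> norm (Fa s b - Fa s 0 - (b - 0) *\<^sub>R G s 0) + norm (b *\<^sub>R (G s 0 - K))"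
      by (rule order_trans[OF _ norm_triangle_ineq]) (simp add: algebra_simps)
    ultimately show ?thesis by (simp add: algebra_simps)
  qed
  have B: "norm (F a b - F a 0 - F 0 b + F 0 0 - (a * b) *\<^sub>R K) \<le> 9 * c * \<bar>a\<bar> * \<bar>b\<bar>"
    if a: "\<bar>a\<bar> < d" and b: "\<bar>b\<bar> < d" for a b
  proof -
    define \<psi> where "\<psi> s = F s b - F s 0 - (s * b) *\<^sub>R K" for s
    define \<psi>' where "\<psi>' s = Fa s b - Fa s 0 - b *\<^sub>R K" for s
    have "norm (\<psi> a - \<psi> 0 - (a - 0) *\<^sub>R \<psi>' 0) \<le> norm (a - 0) * (6 * c * \<bar>b\<bar>)"
    proof (rule vector_differentiable_bound_linearization[where S=S and f' = \<psi>'])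
      fix x assume "x \<in> S"
      hence x: "\<bar>x\<bar> < d" using S by auto
      have "((\<lambda>s. (s * b) *\<^sub>R K) has_vector_derivative b *\<^sub>R K) (at x)"
        by (auto intro!: derivative_eq_intros)
      hence "(\<psi> has_vector_derivative \<psi>' x) (at x)"
        unfolding \<psi>_def \<psi>'_def
        using D1[of x b] D1[of x 0] x b d by (intro derivative_intros) auto
      thus "(\<psi> has_vector_derivative \<psi>' x) (at x within S)"
        by (rule has_vector_derivative_at_within)
    next
      show "closed_segment 0 a \<subseteq> S" using S a d by (intro closed_segment_subset) auto
    next
      fix x assume "x \<in> S"
      hence "\<bar>x\<bar> < d" using S by auto
      hence "norm (\<psi>' x) \<le> 3 * c * \<bar>b\<bar>" "norm (\<psi>' 0) \<le> 3 * c * \<bar>b\<bar>" using A b d by (auto simp: \<psi>'_def)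
      thus "norm (\<psi>' x - \<psi>' 0) \<le> 6 * c * \<bar>b\<bar>" using norm_triangle_ineq4[of "\<psi>' x" "\<psi>' 0"] by linarith
    next
      show "0 \<in> S" using S d by auto
    qed
    moreover have "norm (a *\<^sub>R \<psi>' 0) \<le> \<bar>a\<bar> * (3 * c * \<bar>b\<bar>)"
      using A b d by (auto simp: \<psi>'_def intro!: mult_left_mono)
    moreover have "norm (\<psi> a - \<psi> 0) \<le> norm (\<psi> a - \<psi> 0 - (a - 0) *\<^sub>R \<psi>' 0) + norm (a *\<^sub>R \<psi>' 0)"
      by (rule order_trans[OF _ norm_triangle_ineq]) (simp add: algebra_simps)
    moreover have "\<psi> a - \<psi> 0 = F a b - F a 0 - F 0 b + F 0 0 - (a * b) *\<^sub>R K"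
      by (simp add: \<psi>_def algebra_simps)
    ultimately show ?thesis by (simp add: algebra_simps)
  qed
  show "\<exists>d>0. \<forall>h. 0 < \<bar>h\<bar> \<and> \<bar>h\<bar> < d \<longrightarrow> norm (Fb h - Fb 0 - h *\<^sub>R G 0 0) \<le> e * \<bar>h\<bar>"
  proof (intro exI[of _ d] conjI allI impI)
    fix h :: real assume h: "0 < \<bar>h\<bar> \<and> \<bar>h\<bar> < d"
    define q where "q \<beta> = (F h (0+\<beta>) - F h 0) /\<^sub>R \<beta> - (F 0 (0+\<beta>) - F 0 0) /\<^sub>R \<beta> - h *\<^sub>R K" for \<beta>
    have "(q \<longlongrightarrow> Fb h - Fb 0 - h *\<^sub>R K) (at 0)"
      unfolding q_def using h d
      by (intro tendsto_intros hvd_quot D2) auto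
    moreover have "\<forall>\<^sub>F \<beta> in at 0. norm (q \<beta>) \<le> 9 * c * \<bar>h\<bar>"
      unfolding eventually_at
    proof (intro exI[of _ d] conjI ballI impI)
      fix \<beta> :: real assume "\<beta> \<noteq> 0 \<and> dist \<beta> 0 < d"
      hence bb: "0 < \<bar>\<beta>\<bar>" "\<bar>\<beta>\<bar> < d" by auto
      have "q \<beta> = (F h \<beta> - F h 0 - F 0 \<beta> + F 0 0 - (h * \<beta>) *\<^sub>R K) /\<^sub>R \<beta>"
        using bb by (simp add: q_def algebra_simps scaleR_diff_right)
      hence "norm (q \<beta>) = norm (F h \<beta> - F h 0 - F 0 \<beta> + F 0 0 - (h * \<beta>) *\<^sub>R K) / \<bar>\<beta>\<bar>"
        by (simp add: divide_inverse mult.commute)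
      also have "\<dots> \<le> 9 * c * \<bar>h\<bar> * \<bar>\<beta>\<bar> / \<bar>\<beta>\<bar>"
        using B[of h \<beta>] h bb by (intro divide_right_mono) auto
      also have "\<dots> = 9 * c * \<bar>h\<bar>" using bb by simp
      finally show "norm (q \<beta>) \<le> 9 * c * \<bar>h\<bar>" .
    qed (use d in auto)
    ultimately have "norm (Fb h - Fb 0 - h *\<^sub>R K) \<le> 9 * c * \<bar>h\<bar>"
      by (intro Lim_norm_ubound[of "at 0"]) auto
    thus "norm (Fb h - Fb 0 - h *\<^sub>R G 0 0) \<le> e * \<bar>h\<bar>" by (simp add: K_def c_def)
  qed (use d in auto)
qed

lemma hvd_in_subspace:
  fixes c :: "real \<Rightarrow> 'n::euclidean_space"
  assumes E: "subspace E" and c: "(c has_vector_derivative c') (at 0)"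
    and ev: "\<forall>\<^sub>F h in at 0. c h \<in> E" and c0: "c 0 \<in> E"
  shows "c' \<in> E"
proof -
  have L: "((\<lambda>h. (c (0+h) - c 0) /\<^sub>R h) \<longlongrightarrow> c') (at 0)"
  proof -
    have "((\<lambda>y. norm (c y - c 0 - (y - 0) *\<^sub>R c') / norm (y - 0)) \<longlongrightarrow> 0) (at 0)"
      using c unfolding has_vector_derivative_def has_derivative_iff_norm by blast
    hence L: "((\<lambda>h. norm (c h - c 0 - h *\<^sub>R c') / norm h) \<longlongrightarrow> 0) (at 0)" by simp
    have Eq: "norm (c h - c 0 - h *\<^sub>R c') / norm h = norm ((c (0+h) - c 0) /\<^sub>R h - c')"
      if "h \<noteq> 0" for h
    proof -
      have "(c (0+h) - c 0) /\<^sub>R h - c' = (c h - c 0 - h *\<^sub>R c') /\<^sub>R h"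
        using that by (simp add: scaleR_diff_right)
      thus ?thesis using that by (simp add: divide_inverse mult.commute)
    qed
    have "((\<lambda>h. norm ((c (0+h) - c 0) /\<^sub>R h - c')) \<longlongrightarrow> 0) (at 0)"
      by (rule Lim_transform_within[OF L, where d=1]) (use Eq in auto)
    thus ?thesis by (simp add: tendsto_norm_zero_iff LIM_zero_iff)
  qed
  have "\<forall>\<^sub>F h in at 0. (c (0+h) - c 0) /\<^sub>R h \<in> E"
    using ev by eventually_elim (use E c0 in \<open>auto intro: subspace_scale subspace_diff\<close>)
  thus ?thesis using Lim_in_closed_set[OF closed_subspace[OF E] _ _ L] by auto
qed

lemma subspace_preimage_linear:
  assumes "linear f" "subspace E"
  shows "subspace {v. f v \<in> E}"
  using assms unfolding subspace_def by (auto simp: linear_add linear_scale linear_0)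

lemma ev_nhds_at:
  "eventually P (nhds (x::'a::topological_space)) \<Longrightarrow> eventually P (at x)"
  by (simp add: eventually_at_filter eventually_mono)

lemma cont_ev_open:
  assumes "isCont \<gamma> x" "open U" "\<gamma> x \<in> U"
  shows "eventually (\<lambda>t. \<gamma> t \<in> U) (nhds x)"
proof -
  have "eventually (\<lambda>t. \<gamma> t \<in> U) (at x)"
    using assms by (simp add: isCont_def topological_tendstoD)
  hence "eventually (\<lambda>t. t \<noteq> x \<longrightarrow> \<gamma> t \<in> U) (nhds x)"
    by (simp add: eventually_at_filter)
  thus ?thesis by eventually_elim (use assms in auto)
qed

lemma chart:
  fixes M :: "'n::euclidean_space set"
  assumes "smooth_submanifold M n" "p \<in> M"
  obtains U and \<phi> :: "'n \<Rightarrow> 'n" and \<phi>' \<phi>'' E where "open U" "p \<in> U" "subspace E"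
    "\<And>x. x \<in> U \<Longrightarrow> (\<phi> has_derivative \<phi>' x) (at x)"
    "\<And>x v. x \<in> U \<Longrightarrow> ((\<lambda>y. \<phi>' y v) has_derivative \<phi>'' v x) (at x)"
    "\<And>q. q \<in> M \<Longrightarrow> q \<in> U \<Longrightarrow> tangent_space M q = {v. \<phi>' q v \<in> E}"
proof -
  obtain U V and \<phi> :: "'n \<Rightarrow> 'n" and \<psi> E where UV: "open U" "p \<in> U" "open V" "smooth_on U \<phi>" "smooth_on V \<psi>"
    "\<phi> ` U = V" "\<forall>x\<in>U. \<psi> (\<phi> x) = x" "\<forall>y\<in>V. \<phi> (\<psi> y) = y" "subspace E" "\<phi> ` (M \<inter> U) = V \<inter> E"
    using assms(1)[unfolded smooth_submanifold_def, rule_format, OF assms(2)] by blast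
  have "Ck_on (Suc (Suc 0)) U \<phi>" using UV(4) unfolding smooth_on_def by blast
  then obtain \<phi>' where d1: "\<forall>x\<in>U. (\<phi> has_derivative \<phi>' x) (at x)"
      and d2: "\<forall>v. \<exists>f''. \<forall>x\<in>U. ((\<lambda>x. \<phi>' x v) has_derivative f'' x) (at x)"
    by (simp only: Ck_on.simps) blast
  then obtain \<phi>'' where d2': "\<forall>v. \<forall>x\<in>U. ((\<lambda>x. \<phi>' x v) has_derivative \<phi>'' v x) (at x)"
    by metis
  have "Ck_on (Suc 0) V \<psi>" using UV(5) unfolding smooth_on_def by blast
  then obtain \<psi>' where e1: "\<forall>y\<in>V. (\<psi> has_derivative \<psi>' y) (at y)" by auto
  have inv: "\<psi>' (\<phi> q) (\<phi>' q v) = v" if q: "q \<in> U" for q v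
  proof -
    have "\<phi> q \<in> V" using UV(6) q by auto
    hence "((\<psi> \<circ> \<phi>) has_derivative (\<psi>' (\<phi> q) \<circ> \<phi>' q)) (at q)"
      using d1 e1 q by (intro diff_chain_at) auto
    moreover have "((\<psi> \<circ> \<phi>) has_derivative id) (at q)"
    proof (rule has_derivative_transform_within_open[OF _ UV(1) q])
      show "(id has_derivative id) (at q)" by (simp add: has_derivative_id id_def)
      show "\<And>x. x \<in> U \<Longrightarrow> id x = (\<psi> \<circ> \<phi>) x" using UV(7) by auto
    qed
    ultimately have "\<psi>' (\<phi> q) \<circ> \<phi>' q = id" by (rule has_derivative_unique)
    thus ?thesis by (metis comp_apply id_apply)
  qed
  have inM: "x \<in> M \<longleftrightarrow> \<phi> x \<in> E" if "x \<in> U" for x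
  proof
    assume "x \<in> M" thus "\<phi> x \<in> E" using UV(10) that by blast
  next
    assume "\<phi> x \<in> E"
    moreover have "\<phi> x \<in> V" using UV(6) that by auto
    ultimately have "\<phi> x \<in> \<phi> ` (M \<inter> U)" using UV(10) by blast
    then obtain x' where x': "x' \<in> M \<inter> U" "\<phi> x' = \<phi> x" by auto
    have "x' = x" using UV(7) x' that by (metis IntE)
    thus "x \<in> M" using x' by simp
  qed
  have tan: "tangent_space M q = {v. \<phi>' q v \<in> E}" if q: "q \<in> M" "q \<in> U" for q
  proof (intro set_eqI iffI)
    fix v assume "v \<in> tangent_space M q"
    then obtain \<gamma> where g: "\<gamma> 0 = q" "(\<gamma> has_vector_derivative v) (at 0)" "\<forall>\<^sub>F t in nhds 0. \<gamma> t \<in> M"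
      unfolding tangent_space_def by blast
    have "isCont \<gamma> 0" using has_vector_derivative_continuous[OF g(2)] .
    hence "\<forall>\<^sub>F t in nhds 0. \<gamma> t \<in> U"
      using UV(1) q g(1) by (intro cont_ev_open) auto
    hence ev: "\<forall>\<^sub>F t in nhds 0. \<phi> (\<gamma> t) \<in> E"
      using g(3) by eventually_elim (use inM in auto)
    have "((\<phi> \<circ> \<gamma>) has_vector_derivative \<phi>' q v) (at 0)"
    proof -
      have "((\<phi> \<circ> \<gamma>) has_derivative (\<phi>' q \<circ> (\<lambda>h. h *\<^sub>R v))) (at 0)"
        using g d1 q unfolding has_vector_derivative_def by (intro diff_chain_at) auto
      moreover have "linear (\<phi>' q)" using d1 q has_derivative_linear by blast
      ultimately show ?thesis unfolding has_vector_derivative_def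
        by (simp add: o_def linear_scale)
    qed
    hence "\<phi>' q v \<in> E"
      using hvd_in_subspace[OF UV(9)] ev_nhds_at[OF ev] eventually_nhds_x_imp_x[OF ev]
      by (auto simp: o_def)
    thus "v \<in> {v. \<phi>' q v \<in> E}" by simp
  next
    fix v assume "v \<in> {v. \<phi>' q v \<in> E}"
    hence w: "\<phi>' q v \<in> E" by simp
    have qV: "\<phi> q \<in> V" using UV(6) q by auto
    define \<gamma> where "\<gamma> h = \<psi> (\<phi> q + h *\<^sub>R \<phi>' q v)" for h
    have "\<gamma> 0 = q" using UV(7) q by (simp add: \<gamma>_def)
    moreover have "(\<gamma> has_vector_derivative v) (at 0)"
    proof -
      have "((\<lambda>h. \<phi> q + h *\<^sub>R \<phi>' q v) has_derivative (\<lambda>h. h *\<^sub>R \<phi>' q v)) (at 0)"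
        by (auto intro!: derivative_eq_intros)
      hence "(\<psi> \<circ> (\<lambda>h. \<phi> q + h *\<^sub>R \<phi>' q v) has_derivative (\<psi>' (\<phi> q) \<circ> (\<lambda>h. h *\<^sub>R \<phi>' q v))) (at 0)"
        using e1 qV by (intro diff_chain_at) auto
      moreover have "linear (\<psi>' (\<phi> q))" using e1 qV has_derivative_linear by blast
      ultimately show ?thesis unfolding has_vector_derivative_def \<gamma>_def
        using inv[OF q(2)] by (simp add: o_def linear_scale)
    qed
    moreover have "\<forall>\<^sub>F t in nhds 0. \<gamma> t \<in> M"
    proof -
      have "isCont (\<lambda>h. \<phi> q + h *\<^sub>R \<phi>' q v) 0" by (intro continuous_intros)
      hence "\<forall>\<^sub>F h in nhds 0. \<phi> q + h *\<^sub>R \<phi>' q v \<in> V"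
        using UV(3) qV by (intro cont_ev_open) auto
      thus ?thesis
      proof eventually_elim
        case (elim h)
        have "\<phi> q + h *\<^sub>R \<phi>' q v \<in> E" using UV(9) w inM[OF q(2)] q(1)
          by (intro subspace_add subspace_scale) auto
        hence "\<phi> q + h *\<^sub>R \<phi>' q v \<in> \<phi> ` (M \<inter> U)" using elim UV(10) by blast
        then obtain x where x: "x \<in> M \<inter> U" "\<phi> x = \<phi> q + h *\<^sub>R \<phi>' q v"
          by auto
        have "\<gamma> h = \<psi> (\<phi> x)" using x by (simp add: \<gamma>_def)
        also have "\<dots> = x" using UV(7) x by blast
        finally show ?case using x by simp
      qed
    qed
    ultimately show "v \<in> tangent_space M q" unfolding tangent_space_def by blast
  qed
  show ?thesis
    using UV(1,2,9) d1 d2' tan by (intro that) auto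
qed

lemma orth_proj_unique:
  fixes S :: "'n::euclidean_space set"
  assumes S: "subspace S" and w: "w \<in> S" and o: "\<forall>s\<in>S. (v - w) \<bullet> s = 0"
  shows "orth_proj S v = w"
  unfolding orth_proj_def
proof (rule the_equality)
  show "w \<in> S \<and> (\<forall>s\<in>S. (v - w) \<bullet> s = 0)" using w o by blast
next
  fix w' assume w': "w' \<in> S \<and> (\<forall>s\<in>S. (v - w') \<bullet> s = 0)"
  have d: "w' - w \<in> S" using S w w' by (intro subspace_diff) auto
  have "(w' - w) \<bullet> (w' - w) = (v - w) \<bullet> (w' - w) - (v - w') \<bullet> (w' - w)"
    by (simp add: algebra_simps)
  also have "\<dots> = 0" using o w' d by auto
  finally show "w' = w" by simp
qed

lemma orth_proj_props:
  fixes S :: "'n::euclidean_space set"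
  assumes S: "subspace S"
  shows "orth_proj S v \<in> S" "\<forall>s\<in>S. (v - orth_proj S v) \<bullet> s = 0"
proof -
  obtain y z where yz: "y \<in> span S" "\<And>w. w \<in> span S \<Longrightarrow> orthogonal z w" "v = y + z"
    by (rule orthogonal_subspace_decomp_exists[of S v]) blast
  have y: "y \<in> S" using yz(1) S by (metis span_eq_iff)
  have o: "\<forall>s\<in>S. (v - y) \<bullet> s = 0" using yz(2,3) by (auto simp: orthogonal_def span_base)
  have "orth_proj S v = y" by (rule orth_proj_unique[OF S y o])
  thus "orth_proj S v \<in> S" "\<forall>s\<in>S. (v - orth_proj S v) \<bullet> s = 0" using y o by auto
qed

lemma tangent_subspace:
  fixes M :: "'n::euclidean_space set"
  assumes "smooth_submanifold M n" "q \<in> M"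
  shows "subspace (tangent_space M q)"
proof (rule chart[OF assms])
  fix U :: "'n set" and E :: "'n set" and \<phi> :: "'n \<Rightarrow> 'n" and \<phi>' :: "'n \<Rightarrow> 'n \<Rightarrow> 'n" and \<phi>'' :: "'n \<Rightarrow> 'n \<Rightarrow> 'n \<Rightarrow> 'n"
  assume ch: "open U" "q \<in> U" "subspace E"
    "\<And>x. x \<in> U \<Longrightarrow> (\<phi> has_derivative \<phi>' x) (at x)"
    "\<And>x v. x \<in> U \<Longrightarrow> ((\<lambda>y. \<phi>' y v) has_derivative \<phi>'' v x) (at x)"
    "\<And>q'. q' \<in> M \<Longrightarrow> q' \<in> U \<Longrightarrow> tangent_space M q' = {v. \<phi>' q' v \<in> E}"
  have "linear (\<phi>' q)" using ch(2,4) has_derivative_linear by blast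
  thus "subspace (tangent_space M q)" using ch assms(2) subspace_preimage_linear by auto
qed

locale mfd =
  fixes M :: "'n::euclidean_space set" and n :: nat
  assumes manifold: "smooth_submanifold M n"
begin

lemma tsub: "p \<in> M \<Longrightarrow> subspace (tangent_space M p)"
  using tangent_subspace[OF manifold] .

lemma tproj_in: "p \<in> M \<Longrightarrow> tproj M p v \<in> tangent_space M p"
  unfolding tproj_def using orth_proj_props(1)[OF tsub] .

lemma tproj_orth: "p \<in> M \<Longrightarrow> s \<in> tangent_space M p \<Longrightarrow> (v - tproj M p v) \<bullet> s = 0"
  unfolding tproj_def using orth_proj_props(2)[OF tsub] by blast

lemma tproj_orth': "p \<in> M \<Longrightarrow> s \<in> tangent_space M p \<Longrightarrow> s \<bullet> (v - tproj M p v) = 0"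
  using tproj_orth by (simp add: inner_commute)

lemma tproj_id: "p \<in> M \<Longrightarrow> s \<in> tangent_space M p \<Longrightarrow> tproj M p s = s"
  unfolding tproj_def by (rule orth_proj_unique[OF tsub]) auto

lemma tproj_linear: assumes "p \<in> M" shows "linear (tproj M p)"
proof (rule linearI)
  fix x y
  show "tproj M p (x + y) = tproj M p x + tproj M p y"
    unfolding tproj_def
  proof (rule orth_proj_unique[OF tsub[OF assms]])
    show "orth_proj (tangent_space M p) x + orth_proj (tangent_space M p) y \<in> tangent_space M p"
      using tproj_in[OF assms] unfolding tproj_def by (intro subspace_add[OF tsub[OF assms]]) auto
    show "\<forall>s\<in>tangent_space M p. (x + y - (orth_proj (tangent_space M p) x + orth_proj (tangent_space M p) y)) \<bullet> s = 0"
    proof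
      fix s assume s: "s \<in> tangent_space M p"
      have e: "x + y - (orth_proj (tangent_space M p) x + orth_proj (tangent_space M p) y)
        = (x - orth_proj (tangent_space M p) x) + (y - orth_proj (tangent_space M p) y)" by simp
      show "(x + y - (orth_proj (tangent_space M p) x + orth_proj (tangent_space M p) y)) \<bullet> s = 0"
        unfolding e inner_add_left using tproj_orth[OF assms s] unfolding tproj_def by simp
    qed
  qed
next
  fix c :: real and x
  show "tproj M p (c *\<^sub>R x) = c *\<^sub>R tproj M p x"
    unfolding tproj_def
  proof (rule orth_proj_unique[OF tsub[OF assms]])
    show "c *\<^sub>R orth_proj (tangent_space M p) x \<in> tangent_space M p"
      using tproj_in[OF assms] unfolding tproj_def by (intro subspace_scale[OF tsub[OF assms]]) auto
    show "\<forall>s\<in>tangent_space M p. (c *\<^sub>R x - c *\<^sub>R orth_proj (tangent_space M p) x) \<bullet> s = 0"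
    proof
      fix s assume s: "s \<in> tangent_space M p"
      have e: "c *\<^sub>R x - c *\<^sub>R orth_proj (tangent_space M p) x = c *\<^sub>R (x - orth_proj (tangent_space M p) x)"
        by (simp add: scaleR_diff_right)
      show "(c *\<^sub>R x - c *\<^sub>R orth_proj (tangent_space M p) x) \<bullet> s = 0"
        unfolding e inner_scaleR_left using tproj_orth[OF assms s] unfolding tproj_def by simp
    qed
  qed
qed

end

lemma hvd_real_iff:
  fixes f :: "real \<Rightarrow> real"
  shows "(f has_vector_derivative D) F \<longleftrightarrow> (f has_real_derivative D) F"
proof -
  have "(\<lambda>x. x * D) = (*) D" by (auto simp: mult.commute)
  thus ?thesis by (simp add: has_vector_derivative_def has_field_derivative_def)
qed

lemma hvd_inner:
  fixes f g :: "real \<Rightarrow> 'n::real_inner"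
  assumes "(f has_vector_derivative f') (at x)" "(g has_vector_derivative g') (at x)"
  shows "((\<lambda>h. f h \<bullet> g h) has_vector_derivative (f x \<bullet> g' + f' \<bullet> g x)) (at x)"
proof -
  have "((\<lambda>h. f h \<bullet> g h) has_derivative (\<lambda>h. f x \<bullet> (h *\<^sub>R g') + (h *\<^sub>R f') \<bullet> g x)) (at x)"
    using assms unfolding has_vector_derivative_def by (rule has_derivative_inner)
  moreover have "(\<lambda>h. f x \<bullet> (h *\<^sub>R g') + (h *\<^sub>R f') \<bullet> g x) = (\<lambda>h. h *\<^sub>R (f x \<bullet> g' + f' \<bullet> g x))"
    by (auto simp: algebra_simps)
  ultimately show ?thesis unfolding has_vector_derivative_def by simp
qed

lemma hvd_scale:
  fixes f :: "real \<Rightarrow> real" and g :: "real \<Rightarrow> 'n::real_normed_vector"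
  assumes "(f has_vector_derivative f') (at x)" "(g has_vector_derivative g') (at x)"
  shows "((\<lambda>h. f h *\<^sub>R g h) has_vector_derivative (f x *\<^sub>R g' + f' *\<^sub>R g x)) (at x)"
  using assms by (intro has_vector_derivative_scaleR) (auto simp: hvd_real_iff)

lemma hvd_linear_comp:
  assumes "(\<gamma> has_vector_derivative X) (at 0)" "(f has_derivative f') (at (\<gamma> 0))"
  shows "((\<lambda>h. f (\<gamma> h)) has_vector_derivative f' X) (at 0)"
proof -
  have "((f \<circ> \<gamma>) has_derivative (f' \<circ> (\<lambda>h. h *\<^sub>R X))) (at 0)"
    using assms unfolding has_vector_derivative_def by (intro diff_chain_at) auto
  moreover have "linear f'" using assms(2) has_derivative_linear by blast
  ultimately show ?thesis unfolding has_vector_derivative_def by (simp add: o_def linear_scale)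
qed

lemma linear_basis_expand:
  fixes L :: "'n::euclidean_space \<Rightarrow> 'm::real_vector"
  assumes "linear L"
  shows "L v = (\<Sum>b\<in>Basis. (v \<bullet> b) *\<^sub>R L b)"
proof -
  have "L v = L (\<Sum>b\<in>Basis. (v \<bullet> b) *\<^sub>R b)" by (simp add: euclidean_representation)
  also have "\<dots> = (\<Sum>b\<in>Basis. (v \<bullet> b) *\<^sub>R L b)"
    by (simp add: linear_sum[OF assms] linear_scale[OF assms])
  finally show ?thesis .
qed

lemma sff_key:
  fixes M :: "'n::euclidean_space set" and \<phi> :: "'n \<Rightarrow> 'n"
  assumes U: "open U" "p \<in> U" and E: "subspace E"
    and d1: "\<And>x. x \<in> U \<Longrightarrow> (\<phi> has_derivative \<phi>' x) (at x)"
    and d2: "\<And>x v. x \<in> U \<Longrightarrow> ((\<lambda>y. \<phi>' y v) has_derivative \<phi>'' v x) (at x)"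
    and tan: "\<And>q. q \<in> M \<Longrightarrow> q \<in> U \<Longrightarrow> tangent_space M q = {v. \<phi>' q v \<in> E}"
    and g0: "\<gamma> 0 = p" and gX: "(\<gamma> has_vector_derivative X) (at 0)"
    and ev: "\<forall>\<^sub>F t in nhds 0. \<gamma> t \<in> M \<and> V t \<in> tangent_space M (\<gamma> t)"
    and V0: "V 0 = Y" and VV: "(V has_vector_derivative V') (at 0)"
  shows "\<phi>' p V' + (\<Sum>b\<in>Basis. (Y \<bullet> b) *\<^sub>R \<phi>'' b p X) \<in> E"
proof -
  define c where "c h = (\<Sum>b\<in>Basis. (V h \<bullet> b) *\<^sub>R \<phi>' (\<gamma> h) b)" for h
  have lin: "linear (\<phi>' q)" if "q \<in> U" for q using d1[OF that] has_derivative_linear by blast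
  have evU: "\<forall>\<^sub>F t in nhds 0. \<gamma> t \<in> U"
    using U g0 has_vector_derivative_continuous[OF gX] by (intro cont_ev_open) auto
  have evc: "\<forall>\<^sub>F h in nhds 0. c h \<in> E"
    using ev evU
  proof eventually_elim
    case (elim h)
    hence "\<phi>' (\<gamma> h) (V h) \<in> E" using tan by auto
    thus ?case unfolding c_def using linear_basis_expand[OF lin, of "\<gamma> h" "V h"] elim by simp
  qed
  have dc: "(c has_vector_derivative (\<Sum>b\<in>Basis. (V 0 \<bullet> b) *\<^sub>R \<phi>'' b p X + (V' \<bullet> b) *\<^sub>R \<phi>' (\<gamma> 0) b)) (at 0)"
    unfolding c_def
  proof (rule has_vector_derivative_sum)
    fix b :: 'n assume "b \<in> Basis"
    have "((\<lambda>h. V h \<bullet> b) has_vector_derivative V' \<bullet> b) (at 0)"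
      using hvd_inner[OF VV, of "\<lambda>_. b" 0] by simp
    moreover have "((\<lambda>h. \<phi>' (\<gamma> h) b) has_vector_derivative \<phi>'' b p X) (at 0)"
      using d2[of p b] U g0 by (intro hvd_linear_comp[OF gX]) auto
    ultimately show "((\<lambda>h. (V h \<bullet> b) *\<^sub>R \<phi>' (\<gamma> h) b) has_vector_derivative (V 0 \<bullet> b) *\<^sub>R \<phi>'' b p X + (V' \<bullet> b) *\<^sub>R \<phi>' (\<gamma> 0) b) (at 0)"
      by (rule hvd_scale)
  qed
  have "(\<Sum>b\<in>Basis. (V 0 \<bullet> b) *\<^sub>R \<phi>'' b p X + (V' \<bullet> b) *\<^sub>R \<phi>' (\<gamma> 0) b) \<in> E"
    using hvd_in_subspace[OF E dc ev_nhds_at[OF evc] eventually_nhds_x_imp_x[OF evc]] .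
  moreover have "(\<Sum>b\<in>Basis. (V 0 \<bullet> b) *\<^sub>R \<phi>'' b p X + (V' \<bullet> b) *\<^sub>R \<phi>' (\<gamma> 0) b)
      = \<phi>' p V' + (\<Sum>b\<in>Basis. (Y \<bullet> b) *\<^sub>R \<phi>'' b p X)"
    using linear_basis_expand[OF lin[OF U(2)], of V'] V0 g0 by (simp add: sum.distrib)
  ultimately show ?thesis by simp
qed

context mfd begin

lemma sff_eq:
  assumes g0: "\<gamma> 0 = p" and gX: "(\<gamma> has_vector_derivative X) (at 0)"
    and ev: "\<forall>\<^sub>F t in nhds 0. \<gamma> t \<in> M \<and> V t \<in> tangent_space M (\<gamma> t)"
    and V0: "V 0 = Y" and VV: "(V has_vector_derivative V') (at 0)"
  shows "sff M p X Y = V' - tproj M p V'"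
proof -
  have pM: "p \<in> M" using eventually_nhds_x_imp_x[OF ev] g0 by simp
  define P where "P w \<longleftrightarrow> (\<exists>(\<gamma>::real \<Rightarrow> 'n) V V'.
      \<gamma> 0 = p \<and> (\<gamma> has_vector_derivative X) (at 0) \<and>
      (\<forall>\<^sub>F t in nhds 0. \<gamma> t \<in> M \<and> V t \<in> tangent_space M (\<gamma> t)) \<and>
      V 0 = Y \<and> (V has_vector_derivative V') (at 0) \<and> w = V' - tproj M p V')" for w
  have "P (V' - tproj M p V')" unfolding P_def using assms by blast
  hence "P (sff M p X Y)" unfolding sff_def P_def[symmetric] by (rule someI)
  then obtain \<gamma>2 V2 V2' where w2: "\<gamma>2 0 = p" "(\<gamma>2 has_vector_derivative X) (at 0)"
      "\<forall>\<^sub>F t in nhds 0. \<gamma>2 t \<in> M \<and> V2 t \<in> tangent_space M (\<gamma>2 t)"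
      "V2 0 = Y" "(V2 has_vector_derivative V2') (at 0)" "sff M p X Y = V2' - tproj M p V2'"
    unfolding P_def by blast
  show ?thesis
  proof (rule chart[OF manifold pM])
    fix U :: "'n set" and E :: "'n set" and \<phi> :: "'n \<Rightarrow> 'n" and \<phi>' :: "'n \<Rightarrow> 'n \<Rightarrow> 'n" and \<phi>'' :: "'n \<Rightarrow> 'n \<Rightarrow> 'n \<Rightarrow> 'n"
    assume ch: "open U" "p \<in> U" "subspace E"
      "\<And>x. x \<in> U \<Longrightarrow> (\<phi> has_derivative \<phi>' x) (at x)"
      "\<And>x v. x \<in> U \<Longrightarrow> ((\<lambda>y. \<phi>' y v) has_derivative \<phi>'' v x) (at x)"
      "\<And>q. q \<in> M \<Longrightarrow> q \<in> U \<Longrightarrow> tangent_space M q = {v. \<phi>' q v \<in> E}"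
    have k1: "\<phi>' p V' + (\<Sum>b\<in>Basis. (Y \<bullet> b) *\<^sub>R \<phi>'' b p X) \<in> E"
      by (rule sff_key[OF ch g0 gX ev V0 VV])
    have k2: "\<phi>' p V2' + (\<Sum>b\<in>Basis. (Y \<bullet> b) *\<^sub>R \<phi>'' b p X) \<in> E"
      by (rule sff_key[OF ch w2(1-5)])
    have lin: "linear (\<phi>' p)" using ch(2,4) has_derivative_linear by blast
    have "\<phi>' p (V' - V2') \<in> E"
      using subspace_diff[OF ch(3) k1 k2] by (simp add: linear_diff[OF lin])
    hence "V' - V2' \<in> tangent_space M p" using ch(6)[OF pM ch(2)] by simp
    hence "tproj M p (V' - V2') = V' - V2'" by (rule tproj_id[OF pM])
    hence "(V' - V2') - tproj M p (V' - V2') = 0" by simp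
    hence "(V' - tproj M p V') - (V2' - tproj M p V2') = 0"
      by (simp add: linear_diff[OF tproj_linear[OF pM]] algebra_simps)
    thus "sff M p X Y = V' - tproj M p V'" using w2(6) by simp
  qed
qed

end

definition LD :: "'m::real_normed_vector set \<Rightarrow> 'm \<Rightarrow> ('m \<Rightarrow> 'b::real_normed_vector) \<Rightarrow> ('m \<Rightarrow> 'b) \<Rightarrow> bool" where
  "LD S e F F' \<longleftrightarrow> (\<forall>y\<in>S. ((\<lambda>h. F (y + h *\<^sub>R e)) has_vector_derivative F' y) (at 0))"

lemma LD_D: "LD S e F F' \<Longrightarrow> y \<in> S \<Longrightarrow> ((\<lambda>h. F (y + h *\<^sub>R e)) has_vector_derivative F' y) (at 0)"
  by (simp add: LD_def)

lemma LD_add: "LD S e F F' \<Longrightarrow> LD S e G G' \<Longrightarrow> LD S e (\<lambda>y. F y + G y) (\<lambda>y. F' y + G' y)"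
  unfolding LD_def by (auto intro: has_vector_derivative_add)

lemma LD_diff: "LD S e F F' \<Longrightarrow> LD S e G G' \<Longrightarrow> LD S e (\<lambda>y. F y - G y) (\<lambda>y. F' y - G' y)"
  unfolding LD_def by (auto intro: has_vector_derivative_diff)

lemma LD_sum: "(\<And>i. i \<in> I \<Longrightarrow> LD S e (F i) (F' i)) \<Longrightarrow> LD S e (\<lambda>y. \<Sum>i\<in>I. F i y) (\<lambda>y. \<Sum>i\<in>I. F' i y)"
  unfolding LD_def by (auto intro!: has_vector_derivative_sum)

lemma LD_inner:
  fixes F G :: "'m::real_normed_vector \<Rightarrow> 'n::real_inner"
  shows "LD S e F F' \<Longrightarrow> LD S e G G' \<Longrightarrow> LD S e (\<lambda>y. F y \<bullet> G y) (\<lambda>y. F y \<bullet> G' y + F' y \<bullet> G y)"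
  unfolding LD_def using hvd_inner[of "\<lambda>h. F (_ + h *\<^sub>R e)" _ 0 "\<lambda>h. G (_ + h *\<^sub>R e)"] by auto

lemma LD_scale:
  fixes F :: "'m::real_normed_vector \<Rightarrow> real"
  shows "LD S e F F' \<Longrightarrow> LD S e G G' \<Longrightarrow> LD S e (\<lambda>y. F y *\<^sub>R G y) (\<lambda>y. F y *\<^sub>R G' y + F' y *\<^sub>R G y)"
  unfolding LD_def using hvd_scale[of "\<lambda>h. F (_ + h *\<^sub>R e)" _ 0 "\<lambda>h. G (_ + h *\<^sub>R e)"] by auto

lemma LD_comp:
  fixes F :: "'m::real_normed_vector \<Rightarrow> real"
  assumes "LD S e F F'" "\<And>y. y \<in> S \<Longrightarrow> (g has_real_derivative g' (F y)) (at (F y))"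
  shows "LD S e (\<lambda>y. g (F y)) (\<lambda>y. F' y * g' (F y))"
  unfolding LD_def
proof
  fix y assume y: "y \<in> S"
  have "((g \<circ> (\<lambda>h. F (y + h *\<^sub>R e))) has_vector_derivative F' y * g' (F y)) (at 0)"
    using assms(1) y assms(2)[OF y] by (intro field_vector_diff_chain_at) (auto simp: LD_def)
  thus "((\<lambda>h. g (F (y + h *\<^sub>R e))) has_vector_derivative F' y * g' (F y)) (at 0)"
    by (simp add: o_def)
qed

lemma LD_const: "LD S e (\<lambda>y. c) (\<lambda>y. 0)"
  unfolding LD_def by (auto intro: has_vector_derivative_const)

lemma LD_cong:
  assumes S: "open S" and L: "LD S e F F'" and eq: "\<And>y. y \<in> S \<Longrightarrow> G y = F y"
  shows "LD S e G F'"
  unfolding LD_def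
proof
  fix y assume y: "y \<in> S"
  have op: "open ((\<lambda>h. y + h *\<^sub>R e) -` S)"
    by (rule continuous_open_vimage[OF S]) (intro continuous_intros)
  show "((\<lambda>h. G (y + h *\<^sub>R e)) has_vector_derivative F' y) (at 0)"
    by (rule has_vector_derivative_transform_within_open[OF LD_D[OF L y] op]) (use y eq in auto)
qed

lemma LD_cong2:
  assumes "LD S e F F'" "\<And>y. y \<in> S \<Longrightarrow> F'' y = F' y"
  shows "LD S e F F''"
  using assms unfolding LD_def by auto

lemma LD_unique: "LD S e F F' \<Longrightarrow> LD S e F F'' \<Longrightarrow> y \<in> S \<Longrightarrow> F' y = F'' y"
  unfolding LD_def using vector_derivative_unique_at by blast

lemma LD_vd: "LD S e F F' \<Longrightarrow> y \<in> S \<Longrightarrow> vector_derivative (\<lambda>h. F (y + h *\<^sub>R e)) (at 0) = F' y"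
  unfolding LD_def using vector_derivative_at by blast

lemma LD_zero:
  assumes "open S" "LD S e F F'" "\<And>y. y \<in> S \<Longrightarrow> F y = 0" "y \<in> S"
  shows "F' y = 0"
proof -
  have "LD S e F (\<lambda>y. 0)" by (rule LD_cong[OF assms(1) LD_const]) (use assms(3) in auto)
  thus ?thesis using LD_unique[OF assms(2) _ assms(4)] by metis
qed

lemma LD_norm2:
  fixes F :: "'m::real_normed_vector \<Rightarrow> 'n::real_inner"
  shows "LD S e F F' \<Longrightarrow> LD S e (\<lambda>y. norm (F y) ^ 2) (\<lambda>y. 2 * (F y \<bullet> F' y))"
  using LD_inner[of S e F F' F F'] by (simp add: power2_norm_eq_inner inner_commute)

lemma line_shift:
  fixes e :: "'b::real_normed_vector" and f :: "'b \<Rightarrow> 'c::real_normed_vector"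
  assumes "((\<lambda>h. f (z + h *\<^sub>R e)) has_vector_derivative D) (at 0)" "z = w + \<alpha>0 *\<^sub>R e"
  shows "((\<lambda>\<alpha>. f (w + \<alpha> *\<^sub>R e)) has_vector_derivative D) (at \<alpha>0)"
proof -
  have 1: "((\<lambda>\<alpha>. \<alpha> - \<alpha>0) has_vector_derivative 1) (at \<alpha>0)"
    by (auto intro!: derivative_eq_intros)
  have "(((\<lambda>h. f (z + h *\<^sub>R e)) \<circ> (\<lambda>\<alpha>. \<alpha> - \<alpha>0)) has_vector_derivative 1 *\<^sub>R D) (at \<alpha>0)"
    by (rule vector_diff_chain_at[OF 1]) (use assms(1) in simp)
  moreover have "((\<lambda>h. f (z + h *\<^sub>R e)) \<circ> (\<lambda>\<alpha>. \<alpha> - \<alpha>0)) = (\<lambda>\<alpha>. f (w + \<alpha> *\<^sub>R e))"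
  proof
    fix x
    have "\<alpha>0 *\<^sub>R e + (x - \<alpha>0) *\<^sub>R e = x *\<^sub>R e" using scaleR_left_distrib[of \<alpha>0 "x - \<alpha>0" e] by simp
    hence "z + (x - \<alpha>0) *\<^sub>R e = w + x *\<^sub>R e" using assms(2) by (simp add: add.assoc)
    thus "((\<lambda>h. f (z + h *\<^sub>R e)) \<circ> (\<lambda>\<alpha>. \<alpha> - \<alpha>0)) x = f (w + x *\<^sub>R e)" by simp
  qed
  ultimately show ?thesis by simp
qed

lemma time_shift:
  fixes f :: "real \<Rightarrow> 'v::real_normed_vector"
  assumes "((\<lambda>\<alpha>. f (t + \<alpha>)) has_vector_derivative D) (at a)"
  shows "(f has_vector_derivative D) (at (t + a))"
proof -
  have 1: "((\<lambda>s. s - t) has_vector_derivative 1) (at (t + a))"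
    by (auto intro!: derivative_eq_intros)
  have "(((\<lambda>\<alpha>. f (t + \<alpha>)) \<circ> (\<lambda>s. s - t)) has_vector_derivative 1 *\<^sub>R D) (at (t + a))"
    by (rule vector_diff_chain_at[OF 1]) (use assms in simp)
  thus ?thesis by (simp add: o_def)
qed

locale flow = mfd M n for M :: "'n::euclidean_space set" and n :: nat +
  fixes \<Omega> :: "'m::euclidean_space set" and u :: "real \<Rightarrow> 'm \<Rightarrow> 'n" and a T \<epsilon> :: real
  assumes open\<Omega>: "open \<Omega>" and eps: "\<epsilon> > 0"
    and reg: "parabolic_holder_3a_loc a \<Omega> T u"
    and vals: "\<forall>t\<in>{0..<T}. \<forall>x\<in>closure \<Omega>. u t x \<in> M"
    and eqn: "\<forall>t\<in>{0<..<T}. \<forall>x\<in>\<Omega>.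
       pdt u t x = tproj M (u t x)
         (\<Sum>i\<in>Basis. pdx i (\<lambda>s y. (1 / sqrt (\<epsilon> ^ 2 + (\<Sum>k\<in>Basis. norm (pdx k u s y) ^ 2))) *\<^sub>R pdx i u s y) t x)"
begin

lemma reg_line: "admissible (e # ds) r \<Longrightarrow> t \<in> {0<..<T} \<Longrightarrow> x \<in> \<Omega> \<Longrightarrow>
    ((\<lambda>h. pD ds r u t (x + h *\<^sub>R e)) has_vector_derivative pD (e # ds) r u t x) (at 0)"
  using conjunct1[OF conjunct2[OF reg[unfolded parabolic_holder_3a_loc_def]]] by blast

lemma reg_time: "admissible ([]::'m list) (Suc r) \<Longrightarrow> t \<in> {0<..<T} \<Longrightarrow> x \<in> \<Omega> \<Longrightarrow>
    ((\<lambda>s. pD [] r u s x) has_vector_derivative pD [] (Suc r) u t x) (at t)"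
  using conjunct1[OF conjunct2[OF conjunct2[OF reg[unfolded parabolic_holder_3a_loc_def]]]] by blast

lemma reg_cont: "admissible ds r \<Longrightarrow> \<exists>g. continuous_on ({0..<T} \<times> closure \<Omega>) g \<and>
             (\<forall>t\<in>{0<..<T}. \<forall>x\<in>\<Omega>. g (t, x) = pD ds r u t x)"
  using conjunct1[OF conjunct2[OF conjunct2[OF conjunct2[OF reg[unfolded parabolic_holder_3a_loc_def]]]]] by blast

lemma R_line:
  assumes "e \<in> Basis" "set ds \<subseteq> Basis" "2 * r + length ds \<le> 2" "t \<in> {0<..<T}"
  shows "LD \<Omega> e (pD ds r u t) (pD (e # ds) r u t)"
proof -
  have "admissible (e # ds) r" using assms unfolding admissible_def by auto
  thus ?thesis using reg_line assms(4) unfolding LD_def by blast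
qed

lemma R_time:
  assumes "t \<in> {0<..<T}" "y \<in> \<Omega>"
  shows "((\<lambda>s. u s y) has_vector_derivative pdt u t y) (at t)"
proof -
  have "admissible ([]::'m list) (Suc 0)" unfolding admissible_def by auto
  hence "((\<lambda>s. pD [] 0 u s y) has_vector_derivative pD [] (Suc 0) u t y) (at t)"
    using reg_time assms by blast
  thus ?thesis by simp
qed

lemma R_cont:
  assumes "admissible ds r"
  shows "continuous_on ({0<..<T} \<times> \<Omega>) (\<lambda>(t, y). pD ds r u t y)"
proof -
  obtain g where g: "continuous_on ({0..<T} \<times> closure \<Omega>) g"
    "\<forall>t\<in>{0<..<T}. \<forall>x\<in>\<Omega>. g (t, x) = pD ds r u t x"
    using reg_cont[OF assms] by blast
  have "continuous_on ({0<..<T} \<times> \<Omega>) g"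
    by (rule continuous_on_subset[OF g(1)]) (auto intro: closure_subset[THEN subsetD])
  thus ?thesis by (rule continuous_on_eq) (use g(2) in auto)
qed

lemma R_cont_t:
  assumes "admissible ds r" "t \<in> {0<..<T}"
  shows "continuous_on \<Omega> (pD ds r u t)"
proof -
  have "continuous_on \<Omega> ((\<lambda>(t, y). pD ds r u t y) \<circ> (\<lambda>y. (t, y)))"
    by (rule continuous_on_compose[OF _ continuous_on_subset[OF R_cont[OF assms(1)]]])
       (use assms(2) in \<open>auto intro!: continuous_intros\<close>)
  thus ?thesis by (simp add: o_def)
qed

lemma sym_x:
  assumes t: "t \<in> {0<..<T}" and y: "y \<in> \<Omega>" and ab: "a' \<in> Basis" "b \<in> Basis"
    and ds: "set ds \<subseteq> Basis" "length ds \<le> 1"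
  shows "pD (a' # b # ds) 0 u t y = pD (b # a' # ds) 0 u t y"
proof -
  obtain r where r: "r > 0" "ball y r \<subseteq> \<Omega>" using open\<Omega> y open_contains_ball by blast
  define \<delta> where "\<delta> = r / 2"
  define P where "P \<alpha> \<beta> = y + \<alpha> *\<^sub>R a' + \<beta> *\<^sub>R b" for \<alpha> \<beta>
  have nab: "norm a' = 1" "norm b = 1" using ab by auto
  have Pin: "P \<alpha> \<beta> \<in> \<Omega>" if "\<bar>\<alpha>\<bar> < \<delta>" "\<bar>\<beta>\<bar> < \<delta>" for \<alpha> \<beta>
  proof -
    have "norm (\<alpha> *\<^sub>R a' + \<beta> *\<^sub>R b) \<le> \<bar>\<alpha>\<bar> + \<bar>\<beta>\<bar>"
      using norm_triangle_ineq[of "\<alpha> *\<^sub>R a'" "\<beta> *\<^sub>R b"] nab by simp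
    moreover have "dist (P \<alpha> \<beta>) y = norm (\<alpha> *\<^sub>R a' + \<beta> *\<^sub>R b)" by (simp add: P_def dist_norm)
    ultimately have "dist y (P \<alpha> \<beta>) < r" using that by (simp add: dist_commute \<delta>_def)
    thus ?thesis using r by auto
  qed
  have L0: "LD \<Omega> a' (pD ds 0 u t) (pD (a' # ds) 0 u t)" using R_line[OF ab(1) ds(1) _ t] ds by simp
  have Lb0: "LD \<Omega> b (pD ds 0 u t) (pD (b # ds) 0 u t)" using R_line[OF ab(2) ds(1) _ t] ds by simp
  have s1: "set (a' # ds) \<subseteq> Basis" "2 * 0 + length (a' # ds) \<le> 2" using ds ab by auto
  have Lba: "LD \<Omega> b (pD (a' # ds) 0 u t) (pD (b # a' # ds) 0 u t)" by (rule R_line[OF ab(2) s1 t])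
  have s2: "set (b # ds) \<subseteq> Basis" "2 * 0 + length (b # ds) \<le> 2" using ds ab by auto
  have Lab: "LD \<Omega> a' (pD (b # ds) 0 u t) (pD (a' # b # ds) 0 u t)" by (rule R_line[OF ab(1) s2 t])
  have "((\<lambda>\<alpha>. pD (b # ds) 0 u t (P \<alpha> 0)) has_vector_derivative pD (b # a' # ds) 0 u t (P 0 0)) (at 0)"
  proof (rule schwarz[where F = "\<lambda>\<alpha> \<beta>. pD ds 0 u t (P \<alpha> \<beta>)" and Fa = "\<lambda>\<alpha> \<beta>. pD (a' # ds) 0 u t (P \<alpha> \<beta>)"
        and G = "\<lambda>\<alpha> \<beta>. pD (b # a' # ds) 0 u t (P \<alpha> \<beta>)" and \<delta> = \<delta>])
    show "\<delta> > 0" using r by (simp add: \<delta>_def)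
  next
    fix \<alpha> \<beta> assume h: "\<bar>\<alpha>\<bar> < \<delta>" "\<bar>\<beta>\<bar> < \<delta>"
    show "((\<lambda>a. pD ds 0 u t (P a \<beta>)) has_vector_derivative pD (a' # ds) 0 u t (P \<alpha> \<beta>)) (at \<alpha>)"
      using line_shift[OF LD_D[OF L0 Pin[OF h]], of "y + \<beta> *\<^sub>R b" \<alpha>]
      by (simp add: P_def algebra_simps)
    show "((\<lambda>b'. pD (a' # ds) 0 u t (P \<alpha> b')) has_vector_derivative pD (b # a' # ds) 0 u t (P \<alpha> \<beta>)) (at \<beta>)"
      using line_shift[OF LD_D[OF Lba Pin[OF h]], of "y + \<alpha> *\<^sub>R a'" \<beta>]
      by (simp add: P_def algebra_simps)
  next
    fix \<alpha> assume h: "\<bar>\<alpha>\<bar> < \<delta>"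
    have "\<bar>0::real\<bar> < \<delta>" using r by (simp add: \<delta>_def)
    show "((\<lambda>b'. pD ds 0 u t (P \<alpha> b')) has_vector_derivative pD (b # ds) 0 u t (P \<alpha> 0)) (at 0)"
      using line_shift[OF LD_D[OF Lb0 Pin[OF h \<open>\<bar>0::real\<bar> < \<delta>\<close>]], of "y + \<alpha> *\<^sub>R a'" 0]
      by (simp add: P_def algebra_simps)
  next
    fix e :: real assume e: "e > 0"
    have adm: "admissible (b # a' # ds) 0" using ds ab unfolding admissible_def by auto
    have "isCont (pD (b # a' # ds) 0 u t) y"
      using R_cont_t[OF adm t] open\<Omega> y continuous_on_eq_continuous_at by blast
    then obtain d where d: "d > 0" "\<forall>y'. dist y' y < d \<longrightarrow> dist (pD (b # a' # ds) 0 u t y') (pD (b # a' # ds) 0 u t y) < e"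
      using e unfolding continuous_at_eps_delta by blast
    show "\<exists>d>0. \<forall>\<alpha> \<beta>. \<bar>\<alpha>\<bar> < d \<longrightarrow> \<bar>\<beta>\<bar> < d \<longrightarrow>
        norm (pD (b # a' # ds) 0 u t (P \<alpha> \<beta>) - pD (b # a' # ds) 0 u t (P 0 0)) \<le> e"
    proof (intro exI[of _ "d/2"] conjI allI impI)
      fix \<alpha> \<beta> :: real assume h: "\<bar>\<alpha>\<bar> < d / 2" "\<bar>\<beta>\<bar> < d / 2"
      have "norm (\<alpha> *\<^sub>R a' + \<beta> *\<^sub>R b) \<le> \<bar>\<alpha>\<bar> + \<bar>\<beta>\<bar>"
        using norm_triangle_ineq[of "\<alpha> *\<^sub>R a'" "\<beta> *\<^sub>R b"] nab by simp
      hence "dist (P \<alpha> \<beta>) y < d" using h by (simp add: P_def dist_norm add.assoc)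
      hence "dist (pD (b # a' # ds) 0 u t (P \<alpha> \<beta>)) (pD (b # a' # ds) 0 u t y) < e" using d by blast
      thus "norm (pD (b # a' # ds) 0 u t (P \<alpha> \<beta>) - pD (b # a' # ds) 0 u t (P 0 0)) \<le> e"
        by (simp add: P_def dist_norm)
    qed (use d in auto)
  qed
  hence "((\<lambda>h. pD (b # ds) 0 u t (y + h *\<^sub>R a')) has_vector_derivative pD (b # a' # ds) 0 u t y) (at 0)"
    by (simp add: P_def)
  thus ?thesis using LD_D[OF Lab y] vector_derivative_unique_at by metis
qed

end

lemma time_shift2:
  fixes f :: "real \<Rightarrow> 'v::real_normed_vector"
  assumes "(f has_vector_derivative D) (at (t + a))"
  shows "((\<lambda>\<alpha>. f (t + \<alpha>)) has_vector_derivative D) (at a)"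
proof -
  have 1: "((\<lambda>s. t + s) has_vector_derivative 1) (at a)"
    by (auto intro!: derivative_eq_intros)
  have "((f \<circ> (\<lambda>s. t + s)) has_vector_derivative 1 *\<^sub>R D) (at a)"
    by (rule vector_diff_chain_at[OF 1]) (use assms in simp)
  thus ?thesis by (simp add: o_def)
qed

context flow begin

lemma sym_t:
  assumes t: "t \<in> {0<..<T}" and x: "x \<in> \<Omega>" and k: "k \<in> Basis"
  shows "((\<lambda>s. pdx k u s x) has_vector_derivative pD [k] 1 u t x) (at t)"
proof -
  obtain r where r: "r > 0" "ball x r \<subseteq> \<Omega>" using open\<Omega> x open_contains_ball by blast
  define \<delta> where "\<delta> = min (r/2) (min (t/2) ((T - t)/2))"
  have dpos: "\<delta> > 0" using r t by (auto simp: \<delta>_def)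
  have nk: "norm k = 1" using k by auto
  have Tin: "t + \<alpha> \<in> {0<..<T}" if "\<bar>\<alpha>\<bar> < \<delta>" for \<alpha> using that t by (auto simp: \<delta>_def)
  have Xin: "x + \<beta> *\<^sub>R k \<in> \<Omega>" if "\<bar>\<beta>\<bar> < \<delta>" for \<beta>
  proof -
    have "\<bar>\<beta>\<bar> < r/2" using that by (simp add: \<delta>_def)
    hence "\<bar>\<beta>\<bar> < r" using r(1) by linarith
    hence "dist x (x + \<beta> *\<^sub>R k) < r" using nk by (simp add: dist_norm)
    thus ?thesis using r by auto
  qed
  have adm1: "admissible [k] (Suc 0)" "admissible [] (Suc 0)" "admissible [k] 0" using k by (auto simp: admissible_def)
  have "((\<lambda>\<alpha>. pD [k] 0 u (t + \<alpha>) (x + 0 *\<^sub>R k)) has_vector_derivative pD [k] 1 u (t + 0) (x + 0 *\<^sub>R k)) (at 0)"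
  proof (rule schwarz[where F = "\<lambda>\<alpha> \<beta>. pD [] 0 u (t + \<alpha>) (x + \<beta> *\<^sub>R k)"
        and Fa = "\<lambda>\<alpha> \<beta>. pD [] (Suc 0) u (t + \<alpha>) (x + \<beta> *\<^sub>R k)"
        and G = "\<lambda>\<alpha> \<beta>. pD [k] 1 u (t + \<alpha>) (x + \<beta> *\<^sub>R k)" and \<delta> = \<delta>])
    show "\<delta> > 0" by (rule dpos)
  next
    fix \<alpha> \<beta> assume h: "\<bar>\<alpha>\<bar> < \<delta>" "\<bar>\<beta>\<bar> < \<delta>"
    show "((\<lambda>a. pD [] 0 u (t + a) (x + \<beta> *\<^sub>R k)) has_vector_derivative pD [] (Suc 0) u (t + \<alpha>) (x + \<beta> *\<^sub>R k)) (at \<alpha>)"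
      by (rule time_shift2[where f = "\<lambda>s. pD [] 0 u s (x + \<beta> *\<^sub>R k)"], rule reg_time[OF adm1(2) Tin[OF h(1)] Xin[OF h(2)]])
    have "((\<lambda>h. pD [] (Suc 0) u (t + \<alpha>) ((x + \<beta> *\<^sub>R k) + h *\<^sub>R k)) has_vector_derivative pD [k] 1 u (t + \<alpha>) (x + \<beta> *\<^sub>R k)) (at 0)"
      using reg_line[OF adm1(1) Tin[OF h(1)] Xin[OF h(2)]] by simp
    thus "((\<lambda>b. pD [] (Suc 0) u (t + \<alpha>) (x + b *\<^sub>R k)) has_vector_derivative pD [k] 1 u (t + \<alpha>) (x + \<beta> *\<^sub>R k)) (at \<beta>)"
      by (rule line_shift[where w = x]) simp
  next
    fix \<alpha> assume h: "\<bar>\<alpha>\<bar> < \<delta>"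
    have "\<bar>0::real\<bar> < \<delta>" using dpos by simp
    show "((\<lambda>b. pD [] 0 u (t + \<alpha>) (x + b *\<^sub>R k)) has_vector_derivative pD [k] 0 u (t + \<alpha>) (x + 0 *\<^sub>R k)) (at 0)"
      using reg_line[OF adm1(3) Tin[OF h] x] by simp
  next
    fix e :: real assume e: "e > 0"
    have op: "open ({0<..<T} \<times> \<Omega>)" using open\<Omega> by (intro open_Times) auto
    have "isCont (\<lambda>(t, y). pD [k] 1 u t y) (t, x)"
      using R_cont[OF adm1(1)] op t x continuous_on_eq_continuous_at by fastforce
    then obtain d where d: "d > 0" "\<forall>z. dist z (t, x) < d \<longrightarrow> dist ((\<lambda>(t, y). pD [k] 1 u t y) z) ((\<lambda>(t, y). pD [k] 1 u t y) (t, x)) < e"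
      using e unfolding continuous_at_eps_delta by blast
    show "\<exists>d>0. \<forall>\<alpha> \<beta>. \<bar>\<alpha>\<bar> < d \<longrightarrow> \<bar>\<beta>\<bar> < d \<longrightarrow>
        norm (pD [k] 1 u (t + \<alpha>) (x + \<beta> *\<^sub>R k) - pD [k] 1 u (t + 0) (x + 0 *\<^sub>R k)) \<le> e"
    proof (intro exI[of _ "d/2"] conjI allI impI)
      fix \<alpha> \<beta> :: real assume h: "\<bar>\<alpha>\<bar> < d / 2" "\<bar>\<beta>\<bar> < d / 2"
      have "dist (t + \<alpha>, x + \<beta> *\<^sub>R k) (t, x) = sqrt (\<alpha>\<^sup>2 + \<beta>\<^sup>2)"
        using nk by (simp only: dist_Pair_Pair) (simp add: dist_norm)
      also have "\<dots> \<le> \<bar>\<alpha>\<bar> + \<bar>\<beta>\<bar>" by (rule sqrt_sum_squares_le_sum_abs)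
      finally have "dist (t + \<alpha>, x + \<beta> *\<^sub>R k) (t, x) < d" using h by linarith
      hence "dist (pD [k] 1 u (t + \<alpha>) (x + \<beta> *\<^sub>R k)) (pD [k] 1 u t x) < e" using d by fastforce
      thus "norm (pD [k] 1 u (t + \<alpha>) (x + \<beta> *\<^sub>R k) - pD [k] 1 u (t + 0) (x + 0 *\<^sub>R k)) \<le> e"
        by (simp add: dist_norm)
    qed (use d in auto)
  qed
  hence "((\<lambda>s. pD [k] 0 u s x) has_vector_derivative pD [k] 1 u (t + 0) x) (at (t + 0))"
    by (intro time_shift) simp
  thus ?thesis by simp
qed

end

lemma LD_cmult: "LD S e F F' \<Longrightarrow> LD S e (\<lambda>y. c *\<^sub>R F y) (\<lambda>y. c *\<^sub>R F' y)"
  using LD_scale[OF LD_const, of S e F F' c] by simp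

lemma LD_rmult: fixes F :: "'a::real_normed_vector \<Rightarrow> real"
  shows "LD S e F F' \<Longrightarrow> LD S e (\<lambda>y. c * F y) (\<lambda>y. c * F' y)"
  using LD_cmult[of S e F F' c] by simp

lemma LD_mult: fixes F G :: "'a::real_normed_vector \<Rightarrow> real"
  shows "LD S e F F' \<Longrightarrow> LD S e G G' \<Longrightarrow> LD S e (\<lambda>y. F y * G y) (\<lambda>y. F y * G' y + F' y * G y)"
  using LD_scale[of S e F F' G G'] by simp

lemma g2_alg:
  fixes w s :: real assumes "w + s > 0"
  shows "- ((- (2 * sqrt (w + s)) - inverse (sqrt (w + s)) * (2 * w + 2 * s) / 2) /
        ((2 * w + 2 * s) * sqrt (w + s) * ((2 * w + 2 * s) * sqrt (w + s)))) = 3 / (4 * (w + s)\<^sup>2 * sqrt (w + s))"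
proof -
  define r where "r = sqrt (w + s)"
  have r: "r > 0" "w + s = r * r" using assms by (auto simp: r_def)
  have e: "2 * w + 2 * s = 2 * (r * r)" using r by simp
  show ?thesis unfolding e r_def[symmetric] r(2) using r(1)
    by (simp add: field_simps power2_eq_square)
qed

context flow begin

definition gg :: "real \<Rightarrow> real" where "gg s = 1 / sqrt (\<epsilon>\<^sup>2 + s)"
definition g1 :: "real \<Rightarrow> real" where "g1 s = - 1 / (2 * (\<epsilon>\<^sup>2 + s) * sqrt (\<epsilon>\<^sup>2 + s))"
definition g2 :: "real \<Rightarrow> real" where "g2 s = 3 / (4 * (\<epsilon>\<^sup>2 + s)\<^sup>2 * sqrt (\<epsilon>\<^sup>2 + s))"

lemma gg_deriv: assumes "s \<ge> 0" shows "(gg has_real_derivative g1 s) (at s)"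
proof -
  have q: "\<epsilon>\<^sup>2 + s > 0" using eps assms by (simp add: add_pos_nonneg)
  have "((\<lambda>s. 1 / sqrt (\<epsilon>\<^sup>2 + s)) has_real_derivative
      - (1 * (inverse (sqrt (\<epsilon>\<^sup>2 + s)) / 2 * (0 + 1))) / (sqrt (\<epsilon>\<^sup>2 + s) * sqrt (\<epsilon>\<^sup>2 + s))) (at s)"
    using q by (auto intro!: derivative_eq_intros)
  moreover have "- (1 * (inverse (sqrt (\<epsilon>\<^sup>2 + s)) / 2 * (0 + 1))) / (sqrt (\<epsilon>\<^sup>2 + s) * sqrt (\<epsilon>\<^sup>2 + s)) = g1 s"
    using q by (simp add: g1_def field_simps)
  ultimately show ?thesis by (simp add: gg_def[abs_def])
qed

lemma g1_deriv: assumes "s \<ge> 0" shows "(g1 has_real_derivative g2 s) (at s)"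
proof -
  have q: "\<epsilon>\<^sup>2 + s > 0" using eps assms by (simp add: add_pos_nonneg)
  have sq: "sqrt (\<epsilon>\<^sup>2 + s) * sqrt (\<epsilon>\<^sup>2 + s) = \<epsilon>\<^sup>2 + s" using q by simp
  show ?thesis unfolding g1_def[abs_def]
    using q by (auto intro!: derivative_eq_intros simp: g2_def g2_alg)

qed


definition "Sf t y = (\<Sum>k\<in>Basis. norm (pdx k u t y) ^ 2)"
definition "dS t a' y = (\<Sum>k\<in>Basis. 2 * (pdx k u t y \<bullet> pdx a' (pdx k u) t y))"
definition "ddS t b a' y = (\<Sum>k\<in>Basis. 2 * (pdx k u t y \<bullet> pdx b (pdx a' (pdx k u)) t y + pdx b (pdx k u) t y \<bullet> pdx a' (pdx k u) t y))"
definition "Gf t y = gg (Sf t y)"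
definition "G1 t a' y = dS t a' y * g1 (Sf t y)"
definition "G1' t b a' y = dS t a' y * (dS t b y * g2 (Sf t y)) + ddS t b a' y * g1 (Sf t y)"
definition "Zf t i y = Gf t y *\<^sub>R pdx i u t y"
definition "Z1 t a' i y = Gf t y *\<^sub>R pdx a' (pdx i u) t y + G1 t a' y *\<^sub>R pdx i u t y"
definition "Z2 t b a' i y = (Gf t y *\<^sub>R pdx b (pdx a' (pdx i u)) t y + G1 t b y *\<^sub>R pdx a' (pdx i u) t y)
   + (G1 t a' y *\<^sub>R pdx b (pdx i u) t y + G1' t b a' y *\<^sub>R pdx i u t y)"

lemma B0: "a' \<in> Basis \<Longrightarrow> t \<in> {0<..<T} \<Longrightarrow> LD \<Omega> a' (u t) (pdx a' u t)"
  using R_line[of a' "[]" 0 t] by simp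
lemma B1: "a' \<in> Basis \<Longrightarrow> k \<in> Basis \<Longrightarrow> t \<in> {0<..<T} \<Longrightarrow> LD \<Omega> a' (pdx k u t) (pdx a' (pdx k u) t)"
  using R_line[of a' "[k]" 0 t] by simp
lemma B2: "a' \<in> Basis \<Longrightarrow> b \<in> Basis \<Longrightarrow> k \<in> Basis \<Longrightarrow> t \<in> {0<..<T} \<Longrightarrow>
    LD \<Omega> b (pdx a' (pdx k u) t) (pdx b (pdx a' (pdx k u)) t)"
  using R_line[of b "[a', k]" 0 t] by simp

context
  fixes t assumes t: "t \<in> {0<..<T}"
begin

lemma LSf: "a' \<in> Basis \<Longrightarrow> LD \<Omega> a' (Sf t) (dS t a')"
  unfolding Sf_def[abs_def] dS_def[abs_def]
  by (intro LD_sum LD_norm2 B1 t)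

lemma LdS: "a' \<in> Basis \<Longrightarrow> b \<in> Basis \<Longrightarrow> LD \<Omega> b (dS t a') (ddS t b a')"
  unfolding dS_def[abs_def] ddS_def[abs_def]
  by (intro LD_sum LD_rmult LD_inner B1 B2 t)

lemma Sf_nonneg: "Sf t y \<ge> 0" unfolding Sf_def by (intro sum_nonneg) auto

lemma LGf: "a' \<in> Basis \<Longrightarrow> LD \<Omega> a' (Gf t) (G1 t a')"
  unfolding Gf_def[abs_def] G1_def[abs_def]
  by (intro LD_comp[where g' = g1] LSf gg_deriv Sf_nonneg)

lemma LG1: "a' \<in> Basis \<Longrightarrow> b \<in> Basis \<Longrightarrow> LD \<Omega> b (G1 t a') (G1' t b a')"
proof -
  assume ab: "a' \<in> Basis" "b \<in> Basis"
  have "LD \<Omega> b (\<lambda>y. g1 (Sf t y)) (\<lambda>y. dS t b y * g2 (Sf t y))"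
    by (intro LD_comp[where g' = g2] LSf g1_deriv Sf_nonneg ab)
  from LD_mult[OF LdS[OF ab] this] show ?thesis
    unfolding G1_def[abs_def] G1'_def[abs_def] by simp
qed

lemma LZ: "a' \<in> Basis \<Longrightarrow> i \<in> Basis \<Longrightarrow> LD \<Omega> a' (Zf t i) (Z1 t a' i)"
  unfolding Zf_def[abs_def] Z1_def[abs_def]
  by (intro LD_scale LGf B1 t)

lemma LZ1: "a' \<in> Basis \<Longrightarrow> b \<in> Basis \<Longrightarrow> i \<in> Basis \<Longrightarrow> LD \<Omega> b (Z1 t a' i) (Z2 t b a' i)"
  unfolding Z1_def[abs_def] Z2_def[abs_def]
  by (intro LD_add LD_scale LGf LG1 B1 B2 t)

lemma sym3: "a' \<in> Basis \<Longrightarrow> b \<in> Basis \<Longrightarrow> k \<in> Basis \<Longrightarrow> y \<in> \<Omega> \<Longrightarrow>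
    pdx a' (pdx b (pdx k u)) t y = pdx b (pdx a' (pdx k u)) t y"
  using sym_x[OF t, of y a' b "[k]"] by simp

lemma sym2: "a' \<in> Basis \<Longrightarrow> b \<in> Basis \<Longrightarrow> y \<in> \<Omega> \<Longrightarrow>
    pdx a' (pdx b u) t y = pdx b (pdx a' u) t y"
  using sym_x[OF t, of y a' b "[]"] by simp

lemma ddS_sym: "a' \<in> Basis \<Longrightarrow> b \<in> Basis \<Longrightarrow> y \<in> \<Omega> \<Longrightarrow> ddS t a' b y = ddS t b a' y"
  unfolding ddS_def by (intro sum.cong refl) (simp add: sym3 inner_commute)

lemma Z2_sym: "k \<in> Basis \<Longrightarrow> i \<in> Basis \<Longrightarrow> y \<in> \<Omega> \<Longrightarrow> Z2 t k i i y = Z2 t i k i y"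
proof -
  assume ki: "k \<in> Basis" "i \<in> Basis" and y: "y \<in> \<Omega>"
  have "G1' t k i y = G1' t i k y" unfolding G1'_def using ddS_sym[OF ki y] by (simp add: mult_ac)
  thus ?thesis unfolding Z2_def using sym3[OF ki ki(2) y] by (simp add: add_ac)
qed

end

end

context flow begin

context
  fixes t assumes t: "t \<in> {0<..<T}"
begin

lemma uM: "y \<in> \<Omega> \<Longrightarrow> u t y \<in> M"
proof -
  assume y: "y \<in> \<Omega>"
  have "y \<in> closure \<Omega>" using y closure_subset by blast
  moreover have "t \<in> {0..<T}" using t by auto
  ultimately show ?thesis using vals by blast
qed

lemma ev_line: "y \<in> \<Omega> \<Longrightarrow> \<forall>\<^sub>F h in nhds 0. y + h *\<^sub>R e \<in> \<Omega>"
  by (rule cont_ev_open) (auto intro!: continuous_intros simp: open\<Omega>)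

lemma tanU: "k \<in> Basis \<Longrightarrow> y \<in> \<Omega> \<Longrightarrow> pdx k u t y \<in> tangent_space M (u t y)"
  unfolding tangent_space_def
proof (intro CollectI exI[of _ "\<lambda>h. u t (y + h *\<^sub>R k)"] conjI)
  assume k: "k \<in> Basis" and y: "y \<in> \<Omega>"
  show "((\<lambda>h. u t (y + h *\<^sub>R k)) has_vector_derivative pdx k u t y) (at 0)"
    using LD_D[OF B0[OF k t] y] .
  show "\<forall>\<^sub>F h in nhds 0. u t (y + h *\<^sub>R k) \<in> M"
    using ev_line[OF y, of k] by eventually_elim (rule uM)
qed simp

lemma tanZ: "i \<in> Basis \<Longrightarrow> y \<in> \<Omega> \<Longrightarrow> Zf t i y \<in> tangent_space M (u t y)"
  unfolding Zf_def by (intro subspace_scale[OF tsub[OF uM]] tanU)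

lemma sffA:
  assumes a: "a' \<in> Basis" and x: "x \<in> \<Omega>" and tan: "\<And>y. y \<in> \<Omega> \<Longrightarrow> V y \<in> tangent_space M (u t y)"
    and L: "LD \<Omega> a' V V'"
  shows "sff M (u t x) (pdx a' u t x) (V x) = V' x - tproj M (u t x) (V' x)"
proof (rule sff_eq[where \<gamma> = "\<lambda>h. u t (x + h *\<^sub>R a')" and V = "\<lambda>h. V (x + h *\<^sub>R a')"])
  show "((\<lambda>h. u t (x + h *\<^sub>R a')) has_vector_derivative pdx a' u t x) (at 0)"
    using LD_D[OF B0[OF a t] x] .
  show "\<forall>\<^sub>F h in nhds 0. u t (x + h *\<^sub>R a') \<in> M \<and> V (x + h *\<^sub>R a') \<in> tangent_space M (u t (x + h *\<^sub>R a'))"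
    using ev_line[OF x, of a'] by eventually_elim (use uM tan in auto)
  show "((\<lambda>h. V (x + h *\<^sub>R a')) has_vector_derivative V' x) (at 0)"
    using LD_D[OF L x] .
qed simp_all

end

end

context flow begin

lemma LD_pdx: "LD S e (f t) F' \<Longrightarrow> y \<in> S \<Longrightarrow> pdx e f t y = F' y"
  by (simp add: pdx_def LD_vd)

lemma pD1k: "pD [k] 1 u = pdx k (pdt u)" by (simp add: One_nat_def)

context
  fixes t assumes t: "t \<in> {0<..<T}"
begin

lemma LDt: "k \<in> Basis \<Longrightarrow> LD \<Omega> k (pdt u t) (pdx k (pdt u) t)"
  using R_line[OF _ _ _ t, of k "[]" 1] by (simp add: One_nat_def)

lemma pdxZ:
  assumes y: "y \<in> \<Omega>" and i: "i \<in> Basis" and k: "k \<in> Basis"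
  shows "pdx k (\<lambda>s y. (1 / sqrt (\<epsilon> ^ 2 + (\<Sum>k\<in>Basis. norm (pdx k u s y) ^ 2))) *\<^sub>R pdx i u s y) t y = Z1 t k i y"
proof -
  have e: "(\<lambda>y. (1 / sqrt (\<epsilon> ^ 2 + (\<Sum>k\<in>Basis. norm (pdx k u t y) ^ 2))) *\<^sub>R pdx i u t y) = Zf t i"
    by (simp add: fun_eq_iff Zf_def Gf_def gg_def Sf_def)
  show ?thesis by (rule LD_pdx[OF _ y]) (use LZ[OF t k i] e in simp)
qed

lemma ZsZf: "(1 / sqrt (\<epsilon> ^ 2 + (\<Sum>k\<in>Basis. norm (pdx k u t y) ^ 2))) *\<^sub>R pdx i u t y = Zf t i y"
  by (simp add: Zf_def Gf_def gg_def Sf_def)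

lemma LHS_eq:
  assumes x: "x \<in> \<Omega>"
  shows "pdt (\<lambda>s y. \<Sum>k\<in>Basis. norm (pdx k u s y) ^ 2) t x
       = (\<Sum>k\<in>Basis. 2 * (pdx k u t x \<bullet> pdx k (pdt u) t x))"
proof -
  have "((\<lambda>s. \<Sum>k\<in>Basis. norm (pdx k u s x) ^ 2) has_vector_derivative
      (\<Sum>k\<in>Basis. 2 * (pdx k u t x \<bullet> pdx k (pdt u) t x))) (at t)"
  proof (rule has_vector_derivative_sum)
    fix k :: 'm assume k: "k \<in> Basis"
    have d: "((\<lambda>s. pdx k u s x) has_vector_derivative pdx k (pdt u) t x) (at t)"
      using sym_t[OF t x k] by (simp add: pD1k)
    show "((\<lambda>s. norm (pdx k u s x) ^ 2) has_vector_derivative 2 * (pdx k u t x \<bullet> pdx k (pdt u) t x)) (at t)"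
      using hvd_inner[OF d d] by (simp add: power2_norm_eq_inner inner_commute)
  qed
  thus ?thesis unfolding pdt_def by (rule vector_derivative_at)
qed

lemma RHS1_eq:
  assumes x: "x \<in> \<Omega>" and i: "i \<in> Basis"
  shows "pdx i (\<lambda>s y. \<Sum>k\<in>Basis. pdx k u s y \<bullet> pdx k (\<lambda>s y. (1 / sqrt (\<epsilon> ^ 2 + (\<Sum>k\<in>Basis. norm (pdx k u s y) ^ 2))) *\<^sub>R pdx i u s y) s y) t x
     = (\<Sum>k\<in>Basis. pdx k u t x \<bullet> Z2 t i k i x + pdx i (pdx k u) t x \<bullet> Z1 t k i x)"
proof -
  have L: "LD \<Omega> i (\<lambda>y. \<Sum>k\<in>Basis. pdx k u t y \<bullet> Z1 t k i y)
      (\<lambda>y. \<Sum>k\<in>Basis. pdx k u t y \<bullet> Z2 t i k i y + pdx i (pdx k u) t y \<bullet> Z1 t k i y)"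
    by (intro LD_sum LD_inner B1 LZ1 t i) auto
  have L2: "LD \<Omega> i (\<lambda>y. \<Sum>k\<in>Basis. pdx k u t y \<bullet> pdx k (\<lambda>s y. (1 / sqrt (\<epsilon> ^ 2 + (\<Sum>k\<in>Basis. norm (pdx k u s y) ^ 2))) *\<^sub>R pdx i u s y) t y)
      (\<lambda>y. \<Sum>k\<in>Basis. pdx k u t y \<bullet> Z2 t i k i y + pdx i (pdx k u) t y \<bullet> Z1 t k i y)"
    by (rule LD_cong[OF open\<Omega> L]) (use pdxZ i in auto)
  show ?thesis by (rule LD_pdx[OF _ x]) (use L2 in simp)
qed

end

end

context flow begin

context
  fixes t assumes t: "t \<in> {0<..<T}"
begin

lemma main_tx:
  assumes x: "x \<in> \<Omega>"
  shows "(let Z = (\<lambda>i s y. (1 / sqrt (\<epsilon> ^ 2 + (\<Sum>k\<in>Basis. norm (pdx k u s y) ^ 2))) *\<^sub>R pdx i u s y)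
      in (1/2) * pdt (\<lambda>s y. \<Sum>k\<in>Basis. norm (pdx k u s y) ^ 2) t x =
           (\<Sum>i\<in>Basis. pdx i (\<lambda>s y. \<Sum>k\<in>Basis. pdx k u s y \<bullet> pdx k (Z i) s y) t x)
         - (\<Sum>i\<in>Basis. \<Sum>j\<in>Basis. tproj M (u t x) (pdx j (pdx i u) t x) \<bullet> pdx j (Z i) t x)
         + (\<Sum>i\<in>Basis. \<Sum>j\<in>Basis.
              riem M (u t x) (pdx i u t x) (pdx j u t x) (pdx j u t x) (Z i t x)))"
proof -
  define p where "p = u t x"
  have pM: "p \<in> M" unfolding p_def by (rule uM[OF t x])
  define \<pi> where "\<pi> = tproj M p"
  define N where "N v = v - \<pi> v" for v
  have lin: "linear \<pi>" unfolding \<pi>_def by (rule tproj_linear[OF pM])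
  have orthN: "\<pi> w \<bullet> N v = 0" for w v
    unfolding N_def \<pi>_def by (rule tproj_orth'[OF pM tproj_in[OF pM]])
  have orthN': "N v \<bullet> \<pi> w = 0" for w v using orthN by (simp add: inner_commute)
  define A where "A k = pdx k u t x" for k
  define B where "B i k = pdx i (pdx k u) t x" for i k
  define W where "W k = pdx k (pdt u) t x" for k
  define D where "D y = (\<Sum>i\<in>Basis. Z1 t i i y)" for y
  define Q where "Q y = D y - pdt u t y" for y
  have eqnD: "pdt u t y = tproj M (u t y) (D y)" if y: "y \<in> \<Omega>" for y
  proof -
    have "pdt u t y = tproj M (u t y) (\<Sum>i\<in>Basis. pdx i (\<lambda>s y. (1 / sqrt (\<epsilon> ^ 2 + (\<Sum>k\<in>Basis. norm (pdx k u s y) ^ 2))) *\<^sub>R pdx i u s y) t y)"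
      using eqn t y by blast
    also have "(\<Sum>i\<in>Basis. pdx i (\<lambda>s y. (1 / sqrt (\<epsilon> ^ 2 + (\<Sum>k\<in>Basis. norm (pdx k u s y) ^ 2))) *\<^sub>R pdx i u s y) t y) = D y"
      unfolding D_def by (intro sum.cong refl pdxZ[OF t y])
    finally show ?thesis .
  qed
  have uW: "A k \<bullet> W k = A k \<bullet> (\<Sum>i\<in>Basis. Z2 t k i i x) + B k k \<bullet> Q x" if k: "k \<in> Basis" for k
  proof -
    have LQ: "LD \<Omega> k Q (\<lambda>y. (\<Sum>i\<in>Basis. Z2 t k i i y) - pdx k (pdt u) t y)"
      unfolding Q_def[abs_def] D_def[abs_def] by (intro LD_diff LD_sum LZ1 LDt t k) auto
    have L: "LD \<Omega> k (\<lambda>y. pdx k u t y \<bullet> Q y)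
       (\<lambda>y. pdx k u t y \<bullet> ((\<Sum>i\<in>Basis. Z2 t k i i y) - pdx k (pdt u) t y) + pdx k (pdx k u) t y \<bullet> Q y)"
      by (intro LD_inner B1 LQ t k)
    have z: "pdx k u t y \<bullet> Q y = 0" if y: "y \<in> \<Omega>" for y
      unfolding Q_def eqnD[OF y] by (rule tproj_orth'[OF uM[OF t y] tanU[OF t k y]])
    have "pdx k u t x \<bullet> ((\<Sum>i\<in>Basis. Z2 t k i i x) - pdx k (pdt u) t x) + pdx k (pdx k u) t x \<bullet> Q x = 0"
      by (rule LD_zero[OF open\<Omega> L z x]) auto
    thus ?thesis unfolding A_def B_def W_def by (simp add: inner_diff_right algebra_simps)
  qed
  have Qx: "Q x = N (D x)" unfolding Q_def N_def \<pi>_def p_def using eqnD[OF x] by simp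
  have ND: "N (D x) = (\<Sum>i\<in>Basis. N (Z1 t i i x))"
    unfolding N_def D_def by (simp add: linear_sum[OF lin] sum_subtractf)
  have s1: "sff M p (A j) (A j) = N (B j j)" if j: "j \<in> Basis" for j
    unfolding A_def B_def N_def \<pi>_def p_def
    by (rule sffA[OF t j x tanU[OF t j] B1[OF j j t]])
  have s2: "sff M p (A i) (Zf t i x) = N (Z1 t i i x)" if i: "i \<in> Basis" for i
    unfolding A_def N_def \<pi>_def p_def
    by (rule sffA[OF t i x tanZ[OF t i] LZ[OF t i i]])
  have s3: "sff M p (A i) (A j) = N (B i j)" if i: "i \<in> Basis" and j: "j \<in> Basis" for i j
    unfolding A_def B_def N_def \<pi>_def p_def
    by (rule sffA[OF t i x tanU[OF t j] B1[OF i j t]])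
  have s4: "sff M p (A j) (Zf t i x) = N (Z1 t j i x)" if i: "i \<in> Basis" and j: "j \<in> Basis" for i j
    unfolding A_def N_def \<pi>_def p_def
    by (rule sffA[OF t j x tanZ[OF t i] LZ[OF t j i]])
  have LHS: "(1/2) * (\<Sum>k\<in>Basis. 2 * (A k \<bullet> W k))
      = (\<Sum>k\<in>Basis. \<Sum>i\<in>Basis. A k \<bullet> Z2 t k i i x) + (\<Sum>i\<in>Basis. \<Sum>j\<in>Basis. N (B j j) \<bullet> N (Z1 t i i x))"
  proof -
    have "B k k \<bullet> Q x = (\<Sum>i\<in>Basis. N (B k k) \<bullet> N (Z1 t i i x))" for k
    proof -
      have "B k k \<bullet> Q x = (\<pi> (B k k) + N (B k k)) \<bullet> N (D x)" unfolding Qx by (simp add: N_def)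
      also have "\<dots> = N (B k k) \<bullet> N (D x)" using orthN by (simp add: inner_add_left)
      finally show ?thesis unfolding ND by (simp add: inner_sum_right)
    qed
    note Bk = this
    have "(1/2) * (\<Sum>k\<in>Basis. 2 * (A k \<bullet> W k)) = (\<Sum>k\<in>Basis. A k \<bullet> W k)"
      by (simp add: sum_distrib_left)
    also have "\<dots> = (\<Sum>k\<in>Basis. A k \<bullet> (\<Sum>i\<in>Basis. Z2 t k i i x) + B k k \<bullet> Q x)"
      by (intro sum.cong refl uW)
    also have "\<dots> = (\<Sum>k\<in>Basis. \<Sum>i\<in>Basis. A k \<bullet> Z2 t k i i x) + (\<Sum>k\<in>Basis. \<Sum>i\<in>Basis. N (B k k) \<bullet> N (Z1 t i i x))"
      by (simp only: sum.distrib inner_sum_right Bk)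
    also have "(\<Sum>k\<in>Basis. \<Sum>i\<in>Basis. N (B k k) \<bullet> N (Z1 t i i x)) = (\<Sum>i\<in>Basis. \<Sum>j\<in>Basis. N (B j j) \<bullet> N (Z1 t i i x))"
      by (rule sum.swap)
    finally show ?thesis .
  qed
  have swapZ: "(\<Sum>k\<in>Basis. \<Sum>i\<in>Basis. A k \<bullet> Z2 t k i i x) = (\<Sum>i\<in>Basis. \<Sum>k\<in>Basis. A k \<bullet> Z2 t i k i x)"
  proof -
    have "(\<Sum>k\<in>Basis. \<Sum>i\<in>Basis. A k \<bullet> Z2 t k i i x) = (\<Sum>k\<in>Basis. \<Sum>i\<in>Basis. A k \<bullet> Z2 t i k i x)"
    proof (intro sum.cong refl)
      fix k i :: 'm assume ki: "k \<in> Basis" "i \<in> Basis"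
      show "A k \<bullet> Z2 t k i i x = A k \<bullet> Z2 t i k i x" using Z2_sym[OF t ki x] by simp
    qed
    also have "\<dots> = (\<Sum>i\<in>Basis. \<Sum>k\<in>Basis. A k \<bullet> Z2 t i k i x)" by (rule sum.swap)
    finally show ?thesis .
  qed
  have term0: "B i j \<bullet> Z1 t j i x - \<pi> (B j i) \<bullet> Z1 t j i x - N (B i j) \<bullet> N (Z1 t j i x) = 0"
    if i: "i \<in> Basis" and j: "j \<in> Basis" for i j
  proof -
    have "B j i = B i j" unfolding B_def by (rule sym2[OF t j i x])
    hence "B i j \<bullet> Z1 t j i x - \<pi> (B j i) \<bullet> Z1 t j i x - N (B i j) \<bullet> N (Z1 t j i x)
       = N (B i j) \<bullet> \<pi> (Z1 t j i x)"
      by (simp add: N_def inner_diff_left inner_diff_right)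
    thus ?thesis using orthN' by simp
  qed
  have RHS: "(\<Sum>i\<in>Basis. \<Sum>k\<in>Basis. A k \<bullet> Z2 t i k i x + B i k \<bullet> Z1 t k i x)
       - (\<Sum>i\<in>Basis. \<Sum>j\<in>Basis. \<pi> (B j i) \<bullet> Z1 t j i x)
       + (\<Sum>i\<in>Basis. \<Sum>j\<in>Basis. N (B j j) \<bullet> N (Z1 t i i x) - N (B i j) \<bullet> N (Z1 t j i x))
     = (\<Sum>i\<in>Basis. \<Sum>k\<in>Basis. A k \<bullet> Z2 t i k i x) + (\<Sum>i\<in>Basis. \<Sum>j\<in>Basis. N (B j j) \<bullet> N (Z1 t i i x))"
  proof -
    have "(\<Sum>i\<in>Basis. \<Sum>j\<in>Basis. (A j \<bullet> Z2 t i j i x + B i j \<bullet> Z1 t j i x) - \<pi> (B j i) \<bullet> Z1 t j i x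
            + (N (B j j) \<bullet> N (Z1 t i i x) - N (B i j) \<bullet> N (Z1 t j i x)))
        = (\<Sum>i\<in>Basis. \<Sum>j\<in>Basis. A j \<bullet> Z2 t i j i x + N (B j j) \<bullet> N (Z1 t i i x))"
    proof (intro sum.cong refl)
      fix i j :: 'm assume "i \<in> Basis" "j \<in> Basis"
      from term0[OF this] show "(A j \<bullet> Z2 t i j i x + B i j \<bullet> Z1 t j i x) - \<pi> (B j i) \<bullet> Z1 t j i x
            + (N (B j j) \<bullet> N (Z1 t i i x) - N (B i j) \<bullet> N (Z1 t j i x))
          = A j \<bullet> Z2 t i j i x + N (B j j) \<bullet> N (Z1 t i i x)" by linarith
    qed
    thus ?thesis by (simp add: sum.distrib sum_subtractf)
  qed
  have Zt: "(1 / sqrt (\<epsilon> ^ 2 + (\<Sum>k\<in>Basis. norm (pdx k u t x) ^ 2))) *\<^sub>R pdx i u t x = Zf t i x" for i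
    by (rule ZsZf[OF t])
  have R2: "pdx j (\<lambda>s y. (1 / sqrt (\<epsilon> ^ 2 + (\<Sum>k\<in>Basis. norm (pdx k u s y) ^ 2))) *\<^sub>R pdx i u s y) t x = Z1 t j i x"
    if "i \<in> Basis" "j \<in> Basis" for i j using pdxZ[OF t x that] .
  have G: "(1/2) * (\<Sum>k\<in>Basis. 2 * (A k \<bullet> W k)) =
      (\<Sum>i\<in>Basis. \<Sum>k\<in>Basis. A k \<bullet> Z2 t i k i x + B i k \<bullet> Z1 t k i x)
       - (\<Sum>i\<in>Basis. \<Sum>j\<in>Basis. \<pi> (B j i) \<bullet> Z1 t j i x)
       + (\<Sum>i\<in>Basis. \<Sum>j\<in>Basis. N (B j j) \<bullet> N (Z1 t i i x) - N (B i j) \<bullet> N (Z1 t j i x))"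
    using LHS swapZ RHS by linarith
  have s1': "sff M (u t x) (pdx j u t x) (pdx j u t x) = pdx j (pdx j u) t x - tproj M (u t x) (pdx j (pdx j u) t x)"
    if "j \<in> Basis" for j using s1[OF that] unfolding A_def B_def N_def \<pi>_def p_def .
  have s2': "sff M (u t x) (pdx i u t x) (Zf t i x) = Z1 t i i x - tproj M (u t x) (Z1 t i i x)"
    if "i \<in> Basis" for i using s2[OF that] unfolding A_def N_def \<pi>_def p_def .
  have s3': "sff M (u t x) (pdx i u t x) (pdx j u t x) = pdx i (pdx j u) t x - tproj M (u t x) (pdx i (pdx j u) t x)"
    if "i \<in> Basis" "j \<in> Basis" for i j using s3[OF that] unfolding A_def B_def N_def \<pi>_def p_def .
  have s4': "sff M (u t x) (pdx j u t x) (Zf t i x) = Z1 t j i x - tproj M (u t x) (Z1 t j i x)"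
    if "i \<in> Basis" "j \<in> Basis" for i j using s4[OF that] unfolding A_def N_def \<pi>_def p_def .
  show ?thesis
    unfolding Let_def LHS_eq[OF t x]
    using G[unfolded A_def B_def W_def N_def \<pi>_def p_def]
    by (simp add: RHS1_eq[OF t x] R2 Zt riem_def s1' s2' s3' s4')
qed

end

end

theorem lemma3p2:
  fixes M :: "'n::euclidean_space set"
    and \<Omega> :: "'m::euclidean_space set"
    and u :: "real \<Rightarrow> 'm \<Rightarrow> 'n"
    and n :: nat and a \<epsilon> T :: real
  assumes manifold: "smooth_submanifold M n"
    and complete: "intrinsically_complete M"
    and conn: "connected M"
    and dom: "smooth_domain \<Omega>"
    and alpha: "0 < a" "a < 1"
    and eps: "\<epsilon> > 0"
    and Tpos: "T > 0"
    and reg: "parabolic_holder_3a_loc a \<Omega> T u"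
    and vals: "\<forall>t\<in>{0..<T}. \<forall>x\<in>closure \<Omega>. u t x \<in> M"
    and eqn: "\<forall>t\<in>{0<..<T}. \<forall>x\<in>\<Omega>.
       pdt u t x = tproj M (u t x)
         (\<Sum>i\<in>Basis. pdx i (\<lambda>s y. (1 / sqrt (\<epsilon> ^ 2 + (\<Sum>k\<in>Basis. norm (pdx k u s y) ^ 2))) *\<^sub>R pdx i u s y) t x)"
  shows "\<forall>t\<in>{0<..<T}. \<forall>x\<in>\<Omega>.
     (let Z = (\<lambda>i s y. (1 / sqrt (\<epsilon> ^ 2 + (\<Sum>k\<in>Basis. norm (pdx k u s y) ^ 2))) *\<^sub>R pdx i u s y)
      in (1/2) * pdt (\<lambda>s y. \<Sum>k\<in>Basis. norm (pdx k u s y) ^ 2) t x =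
           (\<Sum>i\<in>Basis. pdx i (\<lambda>s y. \<Sum>k\<in>Basis. pdx k u s y \<bullet> pdx k (Z i) s y) t x)
         - (\<Sum>i\<in>Basis. \<Sum>j\<in>Basis. tproj M (u t x) (pdx j (pdx i u) t x) \<bullet> pdx j (Z i) t x)
         + (\<Sum>i\<in>Basis. \<Sum>j\<in>Basis.
              riem M (u t x) (pdx i u t x) (pdx j u t x) (pdx j u t x) (Z i t x)))"
  proof -
  interpret mfd M n by unfold_locales (rule manifold)
  have op: "open \<Omega>" using dom unfolding smooth_domain_def by blast
  interpret flow M n \<Omega> u a T \<epsilon>
    by unfold_locales (use op eps reg vals eqn in auto)
  show ?thesis using main_tx by blast
qed


end
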